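(* Let $0<p\le 1$ and let $\mathcal{X}=(\mathbf{x}_n)_{n=1}^\infty$ be a spreading basis of a locally $p$-convex quasi-Banach space $\mathbb{X}$. Then there is an equivalent $p$-norm for $\mathbb{X}$ relative to which $\mathcal{X}$ is isometrically spreading.
   Context: Scalars are real or complex. A quasi-Banach space is locally $p$-convex if the origin has a $p$-convex neighbourhood; equivalently it admits an equivalent $p$-norm, i.e. a quasi-norm $\|\cdot\|$ with $\|f+g\|^p\le\|f\|^p+\|g\|^p$. A complete minimal system is a sequence $\mathcal{X}=(\mathbf{x}_n)$ with dense linear span for which there exist $\mathbf{x}_n^*\in\mathbb{X}^*$ with $\mathbf{x}_n^*(\mathbf{x}_k)=\delta_{n,k}$ (coordinate functionals). For $\mathcal{N}\subseteq\mathbb{N}$ and an injective map $\psi\colon\mathcal{N}\to\mathbb{N}$, $\psi$ is a shift relative to $\mathcal{X}$ if the linear map $f\mapsto\sum_{n\in\mathcal{N}}\mathbf{x}_n^*(f)\,\mathbf{x}_{\psi(n)}$, $f\in\operatorname{span}(\mathcal{X})$, extends to a bounded operator $L_\psi\colon\mathbb{X}\to\mathbb{X}$. A spreading basis is a complete minimal system such that every increasing map $\psi\colon\mathbb{N}\to\mathbb{N}$ is a shift and $L_\psi$ is an isomorphism (onto its range). For a sequence $(\mathbf{x}_n)$, $\mathcal{N}\subseteq\mathbb{N}$ and an injective $\psi\colon\mathcal{N}\to\mathbb{N}$, $\psi$ is a translation if the assignment $\mathbf{x}_n\mapsto\mathbf{x}_{\psi(n)}$, $n\in\mathcal{N}$,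 defines a linear map on $\operatorname{span}(\mathbf{x}_n\colon n\in\mathcal{N})$ extending to an isomorphism $T_\psi$ from the closed linear span of $\{\mathbf{x}_n\colon n\in\mathcal{N}\}$ onto the closed linear span of $\{\mathbf{x}_n\colon n\in\psi(\mathcal{N})\}$. A sequence is isometrically spreading if every increasing map $\psi\colon\mathcal{N}\to\mathbb{N}$ with $\mathcal{N}\subseteq\mathbb{N}$ infinite is a translation with $\|T_\psi\|\le 1$. *)

theory Defs
  imports "HOL-Analysis.Analysis"
begin

text \<open>Quasi-Banach spaces over a scalar field 'k (real or complex; we allow any
real normed field, which by Mazur's theorem are exactly R and C).\<close>

definition quasi_norm :: "('k::real_normed_field \<Rightarrow> 'a::ab_group_add \<Rightarrow> 'a) \<Rightarrow> real \<Rightarrow> ('a \<Rightarrow> real) \<Rightarrow> bool" where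
  "quasi_norm sc K N \<longleftrightarrow> K \<ge> 1 \<and>
     (\<forall>x. N x \<ge> 0) \<and> (\<forall>x. N x = 0 \<longleftrightarrow> x = 0) \<and>
     (\<forall>c x. N (sc c x) = norm c * N x) \<and>
     (\<forall>x y. N (x + y) \<le> K * (N x + N y))"

definition qcomplete :: "('a::ab_group_add \<Rightarrow> real) \<Rightarrow> bool" where
  "qcomplete N \<longleftrightarrow> (\<forall>s::nat \<Rightarrow> 'a.
     (\<forall>e>0. \<exists>M. \<forall>m\<ge>M. \<forall>n\<ge>M. N (s m - s n) < e) \<longrightarrow>
     (\<exists>y. (\<lambda>n. N (s n - y)) \<longlonglongrightarrow> 0))"

definition quasi_banach :: "('k::real_normed_field \<Rightarrow> 'a::ab_group_add \<Rightarrow> 'a) \<Rightarrow> ('a \<Rightarrow> real) \<Rightarrow> bool" where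
  "quasi_banach sc N \<longleftrightarrow> vector_space sc \<and> (\<exists>K. quasi_norm sc K N) \<and> qcomplete N"

definition p_norm :: "('k::real_normed_field \<Rightarrow> 'a::ab_group_add \<Rightarrow> 'a) \<Rightarrow> real \<Rightarrow> ('a \<Rightarrow> real) \<Rightarrow> bool" where
  "p_norm sc p N \<longleftrightarrow>
     (\<forall>x. N x \<ge> 0) \<and> (\<forall>x. N x = 0 \<longleftrightarrow> x = 0) \<and>
     (\<forall>c x. N (sc c x) = norm c * N x) \<and>
     (\<forall>x y. N (x + y) powr p \<le> N x powr p + N y powr p)"

definition equiv_qnorm :: "('a \<Rightarrow> real) \<Rightarrow> ('a \<Rightarrow> real) \<Rightarrow> bool" where
  "equiv_qnorm N N' \<longleftrightarrow> (\<exists>c C. 0 < c \<and> 0 < C \<and> (\<forall>x. c * N x \<le> N' x \<and> N' x \<le> C * N x))"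

definition locally_p_convex :: "('k::real_normed_field \<Rightarrow> 'a::ab_group_add \<Rightarrow> 'a) \<Rightarrow> real \<Rightarrow> ('a \<Rightarrow> real) \<Rightarrow> bool" where
  "locally_p_convex sc p N \<longleftrightarrow> (\<exists>N'. p_norm sc p N' \<and> equiv_qnorm N N')"

definition qclosure :: "('a::ab_group_add \<Rightarrow> real) \<Rightarrow> 'a set \<Rightarrow> 'a set" where
  "qclosure N S = {x. \<forall>e>0. \<exists>y\<in>S. N (x - y) < e}"

definition dual_elem :: "('k::real_normed_field \<Rightarrow> 'a::ab_group_add \<Rightarrow> 'a) \<Rightarrow> ('a \<Rightarrow> real) \<Rightarrow> ('a \<Rightarrow> 'k) \<Rightarrow> bool" where
  "dual_elem sc N f \<longleftrightarrow>
     (\<forall>x y. f (x + y) = f x + f y) \<and> (\<forall>c x. f (sc c x) = c * f x) \<and>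
     (\<exists>C. \<forall>x. norm (f x) \<le> C * N x)"

definition bounded_op :: "('k::real_normed_field \<Rightarrow> 'a::ab_group_add \<Rightarrow> 'a) \<Rightarrow> ('a \<Rightarrow> real) \<Rightarrow> ('a \<Rightarrow> 'a) \<Rightarrow> bool" where
  "bounded_op sc N L \<longleftrightarrow>
     (\<forall>x y. L (x + y) = L x + L y) \<and> (\<forall>c x. L (sc c x) = sc c (L x)) \<and>
     (\<exists>C. \<forall>x. N (L x) \<le> C * N x)"

definition coord_functionals :: "('k::real_normed_field \<Rightarrow> 'a::ab_group_add \<Rightarrow> 'a) \<Rightarrow> ('a \<Rightarrow> real) \<Rightarrow> (nat \<Rightarrow> 'a) \<Rightarrow> (nat \<Rightarrow> 'a \<Rightarrow> 'k) \<Rightarrow> bool" where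
  "coord_functionals sc N x xs \<longleftrightarrow>
     (\<forall>n. dual_elem sc N (xs n)) \<and> (\<forall>n k. xs n (x k) = (if n = k then 1 else 0))"

definition complete_minimal_system :: "('k::real_normed_field \<Rightarrow> 'a::ab_group_add \<Rightarrow> 'a) \<Rightarrow> ('a \<Rightarrow> real) \<Rightarrow> (nat \<Rightarrow> 'a) \<Rightarrow> bool" where
  "complete_minimal_system sc N x \<longleftrightarrow>
     qclosure N (module.span sc (range x)) = UNIV \<and> (\<exists>xs. coord_functionals sc N x xs)"

definition is_shift_op :: "('k::real_normed_field \<Rightarrow> 'a::ab_group_add \<Rightarrow> 'a) \<Rightarrow> ('a \<Rightarrow> real) \<Rightarrow> (nat \<Rightarrow> 'a) \<Rightarrow> (nat \<Rightarrow> 'a \<Rightarrow> 'k) \<Rightarrow> nat set \<Rightarrow> (nat \<Rightarrow> nat) \<Rightarrow> ('a \<Rightarrow> 'a) \<Rightarrow> bool" where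
  "is_shift_op sc N x xs Ns psi L \<longleftrightarrow> inj_on psi Ns \<and> bounded_op sc N L \<and>
     (\<forall>f\<in>module.span sc (range x).
        L f = (\<Sum>n\<in>{n\<in>Ns. xs n f \<noteq> 0}. sc (xs n f) (x (psi n))))"

definition spreading_basis :: "('k::real_normed_field \<Rightarrow> 'a::ab_group_add \<Rightarrow> 'a) \<Rightarrow> ('a \<Rightarrow> real) \<Rightarrow> (nat \<Rightarrow> 'a) \<Rightarrow> bool" where
  "spreading_basis sc N x \<longleftrightarrow>
     qclosure N (module.span sc (range x)) = UNIV \<and>
     (\<exists>xs. coord_functionals sc N x xs \<and>
        (\<forall>psi::nat \<Rightarrow> nat. strict_mono psi \<longrightarrow>
           (\<exists>L. is_shift_op sc N x xs UNIV psi L \<and>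
                (\<exists>c>0. \<forall>f. c * N f \<le> N (L f)))))"

definition sub_isomorphism :: "('k::real_normed_field \<Rightarrow> 'a::ab_group_add \<Rightarrow> 'a) \<Rightarrow> ('a \<Rightarrow> real) \<Rightarrow> 'a set \<Rightarrow> 'a set \<Rightarrow> ('a \<Rightarrow> 'a) \<Rightarrow> bool" where
  "sub_isomorphism sc N A B T \<longleftrightarrow>
     (\<forall>u\<in>A. \<forall>v\<in>A. T (u + v) = T u + T v) \<and> (\<forall>c. \<forall>u\<in>A. T (sc c u) = sc c (T u)) \<and>
     bij_betw T A B \<and>
     (\<exists>C. \<forall>u\<in>A. N (T u) \<le> C * N u) \<and> (\<exists>c>0. \<forall>u\<in>A. c * N u \<le> N (T u))"

definition cspan :: "('k::real_normed_field \<Rightarrow> 'a::ab_group_add \<Rightarrow> 'a) \<Rightarrow> ('a \<Rightarrow> real) \<Rightarrow> (nat \<Rightarrow> 'a) \<Rightarrow> nat set \<Rightarrow> 'a set" where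
  "cspan sc N x S = qclosure N (module.span sc (x ` S))"

definition translation_op :: "('k::real_normed_field \<Rightarrow> 'a::ab_group_add \<Rightarrow> 'a) \<Rightarrow> ('a \<Rightarrow> real) \<Rightarrow> (nat \<Rightarrow> 'a) \<Rightarrow> nat set \<Rightarrow> (nat \<Rightarrow> nat) \<Rightarrow> ('a \<Rightarrow> 'a) \<Rightarrow> bool" where
  "translation_op sc N x Ns psi T \<longleftrightarrow> inj_on psi Ns \<and>
     (\<forall>n\<in>Ns. T (x n) = x (psi n)) \<and>
     sub_isomorphism sc N (cspan sc N x Ns) (cspan sc N x (psi ` Ns)) T"

definition isometrically_spreading :: "('k::real_normed_field \<Rightarrow> 'a::ab_group_add \<Rightarrow> 'a) \<Rightarrow> ('a \<Rightarrow> real) \<Rightarrow> (nat \<Rightarrow> 'a) \<Rightarrow> bool" where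
  "isometrically_spreading sc N x \<longleftrightarrow>
     (\<forall>Ns psi. infinite Ns \<and> strict_mono_on Ns psi \<longrightarrow>
        (\<exists>T. translation_op sc N x Ns psi T \<and>
             (\<forall>f\<in>cspan sc N x Ns. N (T f) \<le> N f)))"

end

theory Submission
  imports Defs
begin

locale sb = vector_space sc for sc :: "'k::real_normed_field \<Rightarrow> 'a::ab_group_add \<Rightarrow> 'a" +
  fixes x :: "nat \<Rightarrow> 'a" and xs :: "nat \<Rightarrow> 'a \<Rightarrow> 'k"
  assumes xs_add: "xs n (f + g) = xs n f + xs n g"
  and xs_scale: "xs n (sc c f) = c * xs n f"
  and biorth: "xs n (x k) = (if n = k then 1 else 0)"
begin

definition V where "V = span (range x)"
definition supp where "supp f = {n. xs n f \<noteq> 0}"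
definition R where "R \<rho> f = (\<Sum>n\<in>supp f. sc (xs n f) (x (\<rho> n)))"

lemma xs_zero: "xs n 0 = 0"
  using xs_add[of n 0 0] by simp

lemma xs_diff: "xs n (f - g) = xs n f - xs n g"
proof -
  have "xs n (f - g) + xs n g = xs n f" using xs_add[of n "f - g" g] by simp
  then show ?thesis by (simp add: algebra_simps)
qed

lemma xs_sum: "xs n (sum g A) = (\<Sum>a\<in>A. xs n (g a))"
  by (induction A rule: infinite_finite_induct) (auto simp: xs_zero xs_add)

lemma supp_0[simp]: "supp 0 = {}"
  by (simp add: supp_def xs_zero)

lemma span_rep:
  assumes "f \<in> span (x ` S)"
  shows "finite (supp f) \<and> supp f \<subseteq> S \<and>
         (\<forall>F. finite F \<and> supp f \<subseteq> F \<longrightarrow> f = (\<Sum>n\<in>F. sc (xs n f) (x n)))"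
  using assms
proof (induction rule: span_induct_alt)
  case base
  then show ?case by (simp add: xs_zero)
next
  case (step c v y)
  then obtain k where k: "k \<in> S" "v = x k" by auto
  have xsf: "xs n (sc c v + y) = (if n = k then c else 0) + xs n y" for n
    by (simp add: xs_add xs_scale k biorth)
  have sub: "supp (sc c v + y) \<subseteq> insert k (supp y)"
    by (auto simp: supp_def xsf split: if_splits)
  have fin: "finite (supp (sc c v + y))"
    using step sub finite_subset by blast
  moreover have "supp (sc c v + y) \<subseteq> S" using sub step k by blast
  moreover have "sc c v + y = (\<Sum>n\<in>F. sc (xs n (sc c v + y)) (x n))"
    if F: "finite F" "supp (sc c v + y) \<subseteq> F" for F
  proof -
    let ?G = "insert k (F \<union> supp y)"
    have fy: "finite (supp y)" using step by blast
    have G: "finite ?G" "supp y \<subseteq> ?G" using F fy by auto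
    have "(\<Sum>n\<in>F. sc (xs n (sc c v + y)) (x n)) = (\<Sum>n\<in>?G. sc (xs n (sc c v + y)) (x n))"
      using F sub G by (intro sum.mono_neutral_left) (auto simp: supp_def)
    also have "\<dots> = (\<Sum>n\<in>?G. sc (if n = k then c else 0) (x n)) + (\<Sum>n\<in>?G. sc (xs n y) (x n))"
      by (simp add: xsf scale_left_distrib sum.distrib)
    also have "(\<Sum>n\<in>?G. sc (if n = k then c else 0) (x n)) = sc c v"
      using G(1) k by (simp add: if_distrib[of "\<lambda>r. sc r _"] sum.delta cong: if_cong)
    also have "(\<Sum>n\<in>?G. sc (xs n y) (x n)) = y" using step G by metis
    finally show ?thesis by simp
  qed
  ultimately show ?case by blast
qed

lemma V_rep:
  assumes "f \<in> V" "finite F" "supp f \<subseteq> F"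
  shows "f = (\<Sum>n\<in>F. sc (xs n f) (x n))"
  using span_rep[of f UNIV] assms by (auto simp: V_def)

lemma V_fin: "f \<in> V \<Longrightarrow> finite (supp f)"
  using span_rep[of f UNIV] by (auto simp: V_def)

lemma x_V: "x k \<in> V" by (simp add: V_def span_base)

lemma supp_x: "supp (x k) = {k}"
  by (auto simp: supp_def biorth)

lemma R_sum:
  assumes "finite F" "supp f \<subseteq> F"
  shows "R \<rho> f = (\<Sum>n\<in>F. sc (xs n f) (x (\<rho> n)))"
  unfolding R_def using assms
  by (intro sum.mono_neutral_left) (auto simp: supp_def)

lemma supp_add: "supp (f + g) \<subseteq> supp f \<union> supp g"
  by (auto simp: supp_def xs_add)

lemma supp_scale: "supp (sc c f) \<subseteq> supp f"
  by (auto simp: supp_def xs_scale)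

lemma R_add:
  assumes "f \<in> V" "g \<in> V"
  shows "R \<rho> (f + g) = R \<rho> f + R \<rho> g"
proof -
  let ?F = "supp f \<union> supp g"
  have F: "finite ?F" using assms V_fin by auto
  have "R \<rho> (f + g) = (\<Sum>n\<in>?F. sc (xs n (f + g)) (x (\<rho> n)))"
    using F supp_add by (intro R_sum) auto
  also have "\<dots> = (\<Sum>n\<in>?F. sc (xs n f) (x (\<rho> n))) + (\<Sum>n\<in>?F. sc (xs n g) (x (\<rho> n)))"
    by (simp add: xs_add scale_left_distrib sum.distrib)
  also have "\<dots> = R \<rho> f + R \<rho> g"
    using R_sum[OF F, of f \<rho>] R_sum[OF F, of g \<rho>] by auto
  finally show ?thesis .
qed

lemma R_scale:
  assumes "f \<in> V"
  shows "R \<rho> (sc c f) = sc c (R \<rho> f)"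
proof -
  have F: "finite (supp f)" using assms V_fin by auto
  have "R \<rho> (sc c f) = (\<Sum>n\<in>supp f. sc (xs n (sc c f)) (x (\<rho> n)))"
    using F supp_scale by (intro R_sum) auto
  also have "\<dots> = sc c (R \<rho> f)"
    by (simp add: R_def xs_scale scale_sum_right)
  finally show ?thesis .
qed

lemma R_V: "R \<rho> f \<in> V"
  unfolding R_def V_def by (intro span_sum span_scale span_base) auto

lemma R_span: "R \<rho> f \<in> span (x ` (\<rho> ` supp f))"
  unfolding R_def by (intro span_sum span_scale span_base) auto

lemma xs_R:
  assumes "f \<in> V" "inj_on \<rho> (supp f)"
  shows "xs m (R \<rho> f) = (if m \<in> \<rho> ` supp f then xs (inv_into (supp f) \<rho> m) f else 0)"
proof -
  have "xs m (R \<rho> f) = (\<Sum>n\<in>supp f. xs n f * (if m = \<rho> n then 1 else 0))"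
    unfolding R_def by (simp add: xs_sum xs_scale biorth)
  also have "\<dots> = (\<Sum>n\<in>supp f. if m = \<rho> n then xs n f else 0)"
    by (intro sum.cong) auto
  also have "\<dots> = (if m \<in> \<rho> ` supp f then xs (inv_into (supp f) \<rho> m) f else 0)"
  proof (cases "m \<in> \<rho> ` supp f")
    case True
    then obtain n0 where n0: "n0 \<in> supp f" "m = \<rho> n0" by auto
    have "(\<Sum>n\<in>supp f. if m = \<rho> n then xs n f else 0) = (\<Sum>n\<in>supp f. if n = n0 then xs n f else 0)"
      using assms(2) n0 by (intro sum.cong) (auto simp: inj_on_def)
    also have "\<dots> = xs n0 f" using n0 V_fin[OF assms(1)] by simp
    finally show ?thesis using True n0 assms(2) by simp
  next
    case False
    then show ?thesis by (auto intro!: sum.neutral)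
  qed
  finally show ?thesis .
qed

lemma supp_R:
  assumes "f \<in> V" "inj_on \<rho> (supp f)"
  shows "supp (R \<rho> f) = \<rho> ` supp f"
  using assms by (auto simp: supp_def xs_R inv_into_f_f)

lemma xs_R_at:
  assumes "f \<in> V" "inj_on \<rho> (supp f)" "n \<in> supp f"
  shows "xs (\<rho> n) (R \<rho> f) = xs n f"
  using assms by (simp add: xs_R)

lemma R_comp:
  assumes "f \<in> V" "inj_on \<rho> (supp f)"
  shows "R \<sigma> (R \<rho> f) = R (\<sigma> \<circ> \<rho>) f"
proof -
  have "R \<sigma> (R \<rho> f) = (\<Sum>m\<in>\<rho> ` supp f. sc (xs m (R \<rho> f)) (x (\<sigma> m)))"
    unfolding R_def[of \<sigma> "R \<rho> f"] using supp_R[OF assms] by simp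
  also have "\<dots> = (\<Sum>n\<in>supp f. sc (xs (\<rho> n) (R \<rho> f)) (x (\<sigma> (\<rho> n))))"
    using assms(2) by (simp add: sum.reindex)
  also have "\<dots> = R (\<sigma> \<circ> \<rho>) f"
    unfolding R_def[of "\<sigma> \<circ> \<rho>" f] using assms by (intro sum.cong) (auto simp: xs_R_at)
  finally show ?thesis .
qed

lemma R_cong:
  assumes "\<And>n. n \<in> supp f \<Longrightarrow> \<rho> n = \<sigma> n"
  shows "R \<rho> f = R \<sigma> f"
  unfolding R_def using assms by (intro sum.cong) auto

lemma R_id: "f \<in> V \<Longrightarrow> R id f = f"
  using V_rep[of f "supp f"] V_fin by (simp add: R_def)

lemma R_x: "R \<rho> (x k) = x (\<rho> k)"
  by (simp add: R_def supp_x biorth)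

lemma R_0[simp]: "R \<rho> 0 = 0"
  by (simp add: R_def)

lemma span_supp:
  assumes "f \<in> V" "supp f \<subseteq> S"
  shows "f \<in> span (x ` S)"
proof -
  have "f = (\<Sum>n\<in>supp f. sc (xs n f) (x n))" using V_rep V_fin assms by blast
  also have "\<dots> \<in> span (x ` S)" using assms by (intro span_sum span_scale span_base) auto
  finally show ?thesis .
qed

lemma span_sub_V: "span (x ` S) \<subseteq> V"
  unfolding V_def by (intro span_mono) auto

end

locale sb2 = sb sc x xs for sc :: "'k::real_normed_field \<Rightarrow> 'a::ab_group_add \<Rightarrow> 'a" and x xs +
  fixes Np :: "'a \<Rightarrow> real"
  assumes Np_nonneg: "Np f \<ge> 0"
  and spread: "strict_mono \<psi> \<Longrightarrow> \<exists>C c. c > 0 \<and> (\<forall>f\<in>V. c * Np f \<le> Np (R \<psi> f) \<and> Np (R \<psi> f) \<le> C * Np f)"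
begin

definition goodf where "goodf M \<psi> f \<longleftrightarrow> Np f \<le> M * Np (R \<psi> f) \<and> Np (R \<psi> f) \<le> M * Np f"

lemma shift_trick:
  assumes "strict_mono \<psi>0" "M \<ge> 0"
    and H: "\<And>\<psi> f. strict_mono \<psi> \<Longrightarrow> (\<forall>i<k. \<psi> i = \<psi>0 i) \<Longrightarrow> f \<in> V \<Longrightarrow> goodf M \<psi> f"
  shows "\<exists>K\<ge>1. \<forall>\<phi>. strict_mono \<phi> \<longrightarrow> (\<forall>f\<in>V. goodf K \<phi> f)"
proof -
  define \<sigma> where "\<sigma> = (\<lambda>n::nat. n + k)"
  define \<tau> where "\<tau> = (\<lambda>n::nat. n + \<psi>0 k)"
  have sm\<sigma>: "strict_mono \<sigma>" and sm\<tau>: "strict_mono \<tau>"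
    by (auto simp: strict_mono_def \<sigma>_def \<tau>_def)
  obtain C\<sigma> c\<sigma> where c\<sigma>: "c\<sigma> > 0" "\<And>f. f\<in>V \<Longrightarrow> c\<sigma> * Np f \<le> Np (R \<sigma> f) \<and> Np (R \<sigma> f) \<le> C\<sigma> * Np f"
    using spread[OF sm\<sigma>] by blast
  obtain C\<tau> c\<tau> where c\<tau>: "c\<tau> > 0" "\<And>f. f\<in>V \<Longrightarrow> c\<tau> * Np f \<le> Np (R \<tau> f) \<and> Np (R \<tau> f) \<le> C\<tau> * Np f"
    using spread[OF sm\<tau>] by blast
  define K where "K = max 1 (max (M * C\<sigma> / c\<tau>) (M * C\<tau> / c\<sigma>))"
  have "goodf K \<phi> f" if \<phi>: "strict_mono \<phi>" and f: "f \<in> V" for \<phi> f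
  proof -
    define \<psi> where "\<psi> = (\<lambda>n. if n < k then \<psi>0 n else \<psi>0 k + \<phi> (n - k))"
    have "\<psi> n < \<psi> (Suc n)" for n
    proof -
      consider "Suc n < k" | "Suc n = k" | "n \<ge> k" by linarith
      then show ?thesis
      proof cases
        case 1 then show ?thesis using assms(1) by (simp add: \<psi>_def strict_mono_def)
      next
        case 2
        have "\<psi>0 n < \<psi>0 k" using assms(1) 2 by (simp add: strict_mono_def)
        then show ?thesis using 2 by (simp add: \<psi>_def)
      next
        case 3
        then have "\<phi> (n - k) < \<phi> (Suc n - k)" using \<phi> by (simp add: strict_mono_def Suc_diff_le)
        then show ?thesis using 3 by (simp add: \<psi>_def)
      qed
    qed
    then have sm\<psi>: "strict_mono \<psi>" by (simp add: strict_mono_Suc_iff)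
    have agree: "\<forall>i<k. \<psi> i = \<psi>0 i" by (simp add: \<psi>_def)
    have comp: "\<psi> \<circ> \<sigma> = \<tau> \<circ> \<phi>" by (auto simp: \<psi>_def \<sigma>_def \<tau>_def)
    have inj\<sigma>: "inj_on \<sigma> (supp f)" using sm\<sigma> strict_mono_imp_inj_on by blast
    have inj\<phi>: "inj_on \<phi> (supp f)" using \<phi> strict_mono_imp_inj_on by blast
    have key: "R \<psi> (R \<sigma> f) = R \<tau> (R \<phi> f)"
      using R_comp[OF f inj\<sigma>, of \<psi>] R_comp[OF f inj\<phi>, of \<tau>] comp by simp
    have g: "goodf M \<psi> (R \<sigma> f)" using H[OF sm\<psi> agree R_V] .
    define a where "a = Np f"
    define b where "b = Np (R \<phi> f)"
    define gs where "gs = Np (R \<sigma> f)"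
    define h where "h = Np (R \<tau> (R \<phi> f))"
    have a0: "a \<ge> 0" and b0: "b \<ge> 0" by (simp_all add: a_def b_def Np_nonneg)
    have h1: "c\<tau> * b \<le> h" "h \<le> C\<tau> * b" using c\<tau>(2)[OF R_V] by (simp_all add: b_def h_def)
    have h2: "c\<sigma> * a \<le> gs" "gs \<le> C\<sigma> * a" using c\<sigma>(2)[OF f] by (simp_all add: a_def gs_def)
    have h3: "gs \<le> M * h" "h \<le> M * gs" using g key by (simp_all add: goodf_def gs_def h_def)
    have "c\<tau> * b \<le> M * (C\<sigma> * a)"
      using h1(1) h3(2) h2(2) mult_left_mono[OF h2(2) assms(2)] by linarith
    then have b1: "b \<le> (M * C\<sigma> / c\<tau>) * a" using c\<tau>(1) by (simp add: field_simps)
    have "c\<sigma> * a \<le> M * (C\<tau> * b)"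
      using h2(1) h3(1) mult_left_mono[OF h1(2) assms(2)] by linarith
    then have a1: "a \<le> (M * C\<tau> / c\<sigma>) * b" using c\<sigma>(1) by (simp add: field_simps)
    have "(M * C\<sigma> / c\<tau>) * a \<le> K * a" using a0 by (intro mult_right_mono) (auto simp: K_def)
    moreover have "(M * C\<tau> / c\<sigma>) * b \<le> K * b" using b0 by (intro mult_right_mono) (auto simp: K_def)
    ultimately show ?thesis using a1 b1 by (simp add: goodf_def a_def b_def)
  qed
  moreover have "K \<ge> 1" by (simp add: K_def)
  ultimately show ?thesis by blast
qed

lemma uniform_bound:
  "\<exists>K\<ge>1. \<forall>\<phi>. strict_mono \<phi> \<longrightarrow> (\<forall>f\<in>V. goodf K \<phi> f)"
proof (rule ccontr)
  assume nK: "\<not> ?thesis"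
  have H: "\<exists>q. strict_mono (fst q) \<and> (\<forall>i<k. fst q i = \<psi>0 i) \<and> snd q \<in> V \<and> \<not> goodf (real (Suc j)) (fst q) (snd q)"
    if "strict_mono \<psi>0" for k \<psi>0 j
  proof (rule ccontr)
    assume "\<not> ?thesis"
    note nq = this
    have gd: "goodf (real (Suc j)) \<psi> f" if "strict_mono \<psi>" "\<forall>i<k. \<psi> i = \<psi>0 i" "f \<in> V" for \<psi> f
    proof (rule ccontr)
      assume "\<not> goodf (real (Suc j)) \<psi> f"
      then have "\<exists>q. strict_mono (fst q) \<and> (\<forall>i<k. fst q i = \<psi>0 i) \<and> snd q \<in> V \<and> \<not> goodf (real (Suc j)) (fst q) (snd q)"
        using that by (intro exI[of _ "(\<psi>, f)"]) (simp only: fst_conv snd_conv, blast)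
      with nq show False by blast
    qed
    have "\<exists>K\<ge>1. \<forall>\<phi>. strict_mono \<phi> \<longrightarrow> (\<forall>f\<in>V. goodf K \<phi> f)"
      by (rule shift_trick[OF that _ gd]) auto
    with nK show False by blast
  qed
  define ch where "ch k \<psi>0 j = (SOME q. strict_mono (fst q) \<and> (\<forall>i<k. fst q i = \<psi>0 i) \<and> snd q \<in> V \<and> \<not> goodf (real (Suc j)) (fst q) (snd q))" for k \<psi>0 j
  have chP: "strict_mono (fst (ch k \<psi>0 j)) \<and> (\<forall>i<k. fst (ch k \<psi>0 j) i = \<psi>0 i) \<and> snd (ch k \<psi>0 j) \<in> V \<and> \<not> goodf (real (Suc j)) (fst (ch k \<psi>0 j)) (snd (ch k \<psi>0 j))"
    if "strict_mono \<psi>0" for k \<psi>0 j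
    unfolding ch_def by (rule someI_ex) (rule H[OF that])
  define st :: "nat \<Rightarrow> nat \<times> (nat \<Rightarrow> nat)" where
    "st = rec_nat (0, id) (\<lambda>j s. (Suc (fst s + Max (insert 0 (supp (snd (ch (fst s) (snd s) j))))), fst (ch (fst s) (snd s) j)))"
  have st0: "st 0 = (0, id)" by (simp add: st_def)
  have stS: "st (Suc j) = (Suc (fst (st j) + Max (insert 0 (supp (snd (ch (fst (st j)) (snd (st j)) j))))), fst (ch (fst (st j)) (snd (st j)) j))" for j
    by (simp add: st_def)
  have sm: "strict_mono (snd (st j))" for j
  proof (induction j)
    case 0 then show ?case by (simp add: st0 strict_mono_def)
  next
    case (Suc j) then show ?case using chP[OF Suc] by (simp add: stS)
  qed
  have fstS: "fst (st j) < fst (st (Suc j))" for j by (simp add: stS)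
  have fst_mono: "fst (st j) \<le> fst (st j')" if "j \<le> j'" for j j'
    using that
  proof (induction rule: dec_induct)
    case (step m) then show ?case using fstS[of m] by linarith
  qed simp
  have fst_ge: "j \<le> fst (st j)" for j
  proof (induction j)
    case (Suc j) then show ?case using fstS[of j] by linarith
  qed simp
  have agreeS: "snd (st (Suc j)) i = snd (st j) i" if "i < fst (st j)" for i j
    using chP[OF sm[of j]] that by (simp add: stS)
  have chain: "snd (st j') i = snd (st j) i" if "j \<le> j'" "i < fst (st j)" for i j j'
    using that(1)
  proof (induction j' rule: dec_induct)
    case base then show ?case by simp
  next
    case (step m)
    have "i < fst (st m)" using that(2) fst_mono[OF step(1)] by linarith
    then show ?case using agreeS step by simp
  qed
  define \<psi> where "\<psi> i = snd (st (Suc i)) i" for i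
  have \<psi>eq: "\<psi> i = snd (st j) i" if "i < fst (st j)" for i j
  proof -
    have "i < fst (st (Suc i))" using fst_ge[of "Suc i"] by simp
    then have "snd (st (max j (Suc i))) i = snd (st (Suc i)) i" by (intro chain) auto
    moreover have "snd (st (max j (Suc i))) i = snd (st j) i" using that by (intro chain) auto
    ultimately show ?thesis by (simp add: \<psi>_def)
  qed
  have sm\<psi>: "strict_mono \<psi>"
  proof (rule strict_monoI)
    fix i i' :: nat assume "i < i'"
    moreover have "i' < fst (st (Suc i'))" using fst_ge[of "Suc i'"] by simp
    ultimately show "\<psi> i < \<psi> i'"
      using \<psi>eq[of i "Suc i'"] \<psi>eq[of i' "Suc i'"] sm[of "Suc i'"] by (simp add: strict_mono_def)
  qed
  obtain C c where Cc: "c > 0" "\<And>f. f\<in>V \<Longrightarrow> c * Np f \<le> Np (R \<psi> f) \<and> Np (R \<psi> f) \<le> C * Np f"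
    using spread[OF sm\<psi>] by blast
  obtain j :: nat where j: "max C (1 / c) < real j" using reals_Archimedean2 by blast
  define f where "f = snd (ch (fst (st j)) (snd (st j)) j)"
  have fV: "f \<in> V" and bad: "\<not> goodf (real (Suc j)) (snd (st (Suc j))) f"
    using chP[OF sm[of j]] by (simp_all add: f_def stS)
  have "n < fst (st (Suc j))" if "n \<in> supp f" for n
  proof -
    have "n \<le> Max (insert 0 (supp f))" using V_fin[OF fV] that by simp
    then show ?thesis by (simp add: stS f_def)
  qed
  then have "R \<psi> f = R (snd (st (Suc j))) f" by (intro R_cong \<psi>eq)
  then have bad': "\<not> goodf (real (Suc j)) \<psi> f" using bad by (simp add: goodf_def)
  have b1: "Np (R \<psi> f) \<le> C * Np f" and b2: "c * Np f \<le> Np (R \<psi> f)" using Cc(2)[OF fV] by auto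
  have "C * Np f \<le> real (Suc j) * Np f" using j Np_nonneg by (intro mult_right_mono) auto
  moreover have "Np f \<le> (1 / c) * Np (R \<psi> f)" using b2 Cc(1) by (simp add: field_simps)
  moreover have "(1 / c) * Np (R \<psi> f) \<le> real (Suc j) * Np (R \<psi> f)" using j Np_nonneg by (intro mult_right_mono) auto
  ultimately have "goodf (real (Suc j)) \<psi> f" using b1 by (simp add: goodf_def)
  with bad' show False by simp
qed

end

context sb2
begin

lemma reloc_bound:
  "\<exists>D\<ge>1. \<forall>f\<in>V. \<forall>\<rho>. strict_mono_on (supp f) \<rho> \<longrightarrow> Np (R \<rho> f) \<le> D * Np f \<and> Np f \<le> D * Np (R \<rho> f)"
proof -
  obtain K where K: "K \<ge> 1" "\<And>\<phi> f. strict_mono \<phi> \<Longrightarrow> f \<in> V \<Longrightarrow> goodf K \<phi> f"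
    using uniform_bound by blast
  have "Np (R \<rho> f) \<le> (K * K) * Np f \<and> Np f \<le> (K * K) * Np (R \<rho> f)"
    if f: "f \<in> V" and \<rho>: "strict_mono_on (supp f) \<rho>" for f \<rho>
  proof -
    define F where "F = supp f"
    have finF: "finite F" using V_fin[OF f] by (simp add: F_def)
    have \<rho>F: "strict_mono_on F \<rho>" using \<rho> by (simp add: F_def)
    define r where "r m = Max (insert 0 (\<rho> ` {n\<in>F. n \<le> m}))" for m
    define \<psi> where "\<psi> m = m + r m" for m
    define e where "e j = Max (insert 0 {n\<in>F. \<rho> n \<le> j})" for j
    define \<phi> where "\<phi> j = j + e j" for j
    have r_mono: "r m \<le> r m'" if "m \<le> m'" for m m'
      unfolding r_def using that finF by (intro Max_mono) auto
    have e_mono: "e j \<le> e j'" if "j \<le> j'" for j j'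
      unfolding e_def using that finF by (intro Max_mono) auto
    have sm\<psi>: "strict_mono \<psi>"
    proof (rule strict_monoI)
      fix m m' :: nat assume "m < m'"
      moreover have "r m \<le> r m'" using \<open>m < m'\<close> by (intro r_mono) simp
      ultimately show "\<psi> m < \<psi> m'" by (simp add: \<psi>_def)
    qed
    have sm\<phi>: "strict_mono \<phi>"
    proof (rule strict_monoI)
      fix m m' :: nat assume "m < m'"
      moreover have "e m \<le> e m'" using \<open>m < m'\<close> by (intro e_mono) simp
      ultimately show "\<phi> m < \<phi> m'" by (simp add: \<phi>_def)
    qed
    have r_eq: "r n = \<rho> n" if "n \<in> F" for n
      unfolding r_def
    proof (rule Max_eqI)
      show "finite (insert 0 (\<rho> ` {n' \<in> F. n' \<le> n}))" using finF by simp
      show "\<rho> n \<in> insert 0 (\<rho> ` {n' \<in> F. n' \<le> n})" using that by auto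
      fix y assume "y \<in> insert 0 (\<rho> ` {n' \<in> F. n' \<le> n})"
      then consider "y = 0" | n' where "n' \<in> F" "n' \<le> n" "y = \<rho> n'" by blast
      then show "y \<le> \<rho> n"
      proof cases
        case 2
        show ?thesis
        proof (cases "n' = n")
          case False
          then have "n' < n" using 2 by simp
          then show ?thesis using strict_mono_onD[OF \<rho>F 2(1) that] 2 by simp
        qed (use 2 in simp)
      qed simp
    qed
    have e_eq: "e (\<rho> n) = n" if "n \<in> F" for n
      unfolding e_def
    proof (rule Max_eqI)
      show "finite (insert 0 {n' \<in> F. \<rho> n' \<le> \<rho> n})" using finF by simp
      show "n \<in> insert 0 {n' \<in> F. \<rho> n' \<le> \<rho> n}" using that by auto
      fix y assume "y \<in> insert 0 {n' \<in> F. \<rho> n' \<le> \<rho> n}"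
      then consider "y = 0" | "y \<in> F" "\<rho> y \<le> \<rho> n" by blast
      then show "y \<le> n"
      proof cases
        case 2
        show ?thesis
        proof (rule ccontr)
          assume "\<not> y \<le> n"
          then have "n < y" by simp
          then have "\<rho> n < \<rho> y" using strict_mono_onD[OF \<rho>F that 2(1)] by simp
          then show False using 2 by simp
        qed
      qed simp
    qed
    have inj\<rho>: "inj_on \<rho> (supp f)" using \<rho> strict_mono_on_imp_inj_on by blast
    have key: "R \<phi> (R \<rho> f) = R \<psi> f"
      unfolding R_comp[OF f inj\<rho>]
      by (rule R_cong) (simp add: \<phi>_def \<psi>_def e_eq r_eq F_def)
    have g1: "goodf K \<psi> f" using K(2)[OF sm\<psi> f] .
    have g2: "goodf K \<phi> (R \<rho> f)" using K(2)[OF sm\<phi> R_V] .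
    have K0: "K \<ge> 0" using K(1) by simp
    have "Np (R \<rho> f) \<le> K * Np (R \<psi> f)" using g2 key by (simp add: goodf_def)
    also have "\<dots> \<le> K * (K * Np f)" using g1 K0 by (intro mult_left_mono) (auto simp: goodf_def)
    finally have a: "Np (R \<rho> f) \<le> (K * K) * Np f" by (simp add: mult.assoc)
    have "Np f \<le> K * Np (R \<psi> f)" using g1 by (simp add: goodf_def)
    also have "\<dots> \<le> K * (K * Np (R \<rho> f))" using g2 key K0 by (intro mult_left_mono) (auto simp: goodf_def)
    finally have b: "Np f \<le> (K * K) * Np (R \<rho> f)" by (simp add: mult.assoc)
    show ?thesis using a b by simp
  qed
  moreover have "K * K \<ge> 1" using mult_mono[OF K(1) K(1)] K(1) by simp
  ultimately show ?thesis by blast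
qed

end

locale sb3 = sb2 sc x xs Np for sc :: "'k::real_normed_field \<Rightarrow> 'a::ab_group_add \<Rightarrow> 'a" and x xs Np +
  fixes p :: real
  assumes p_pos: "0 < p"
  and Np_scale: "Np (sc c f) = norm c * Np f"
  and Np_tri: "Np (f + g) powr p \<le> Np f powr p + Np g powr p"
  and Np_zero: "Np f = 0 \<longleftrightarrow> f = 0"
begin

definition D where "D = (SOME D. D\<ge>1 \<and> (\<forall>f\<in>V. \<forall>\<rho>. strict_mono_on (supp f) \<rho> \<longrightarrow> Np (R \<rho> f) \<le> D * Np f \<and> Np f \<le> D * Np (R \<rho> f)))"

lemma D_prop: "D \<ge> 1 \<and> (\<forall>f\<in>V. \<forall>\<rho>. strict_mono_on (supp f) \<rho> \<longrightarrow> Np (R \<rho> f) \<le> D * Np f \<and> Np f \<le> D * Np (R \<rho> f))"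
  unfolding D_def by (rule someI_ex) (rule reloc_bound)

lemma D_ge1: "D \<ge> 1" using D_prop by blast

lemma D_bound:
  assumes "f \<in> V" "strict_mono_on (supp f) \<rho>"
  shows "Np (R \<rho> f) \<le> D * Np f" "Np f \<le> D * Np (R \<rho> f)"
  using D_prop assms by blast+

definition G where "G t f = {\<rho>. \<forall>n\<in>supp f. Suc t \<le> \<rho> n \<and> (\<forall>m\<in>supp f. n < m \<longrightarrow> \<rho> n + Suc t \<le> \<rho> m)}"
definition S where "S t f = (SUP \<rho>\<in>G t f. Np (R \<rho> f))"
definition N1 where "N1 f = lim (\<lambda>t. S t f)"

lemma G_ne: "(\<lambda>n. Suc t * Suc n) \<in> G t f"
proof -
  have "Suc t * Suc n + Suc t \<le> Suc t * Suc m" if "n < m" for n m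
  proof -
    have "Suc t * Suc n + Suc t = Suc t * Suc (Suc n)" by simp
    also have "\<dots> \<le> Suc t * Suc m" using that by (intro mult_le_mono2) simp
    finally show ?thesis .
  qed
  then show ?thesis by (auto simp: G_def)
qed

lemma G_sm: "\<rho> \<in> G t f \<Longrightarrow> strict_mono_on (supp f) \<rho>"
  by (rule strict_mono_onI) (fastforce simp: G_def)

lemma G_anti: "t \<le> t' \<Longrightarrow> G t' f \<subseteq> G t f"
  unfolding G_def by force

lemma S_bdd: "f \<in> V \<Longrightarrow> bdd_above ((\<lambda>\<rho>. Np (R \<rho> f)) ` G t f)"
  by (rule bdd_aboveI2[of _ _ "D * Np f"]) (auto intro: D_bound G_sm)

lemma S_ge: "f \<in> V \<Longrightarrow> \<rho> \<in> G t f \<Longrightarrow> Np (R \<rho> f) \<le> S t f"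
  unfolding S_def by (rule cSUP_upper) (auto intro: S_bdd)

lemma S_upper: "f \<in> V \<Longrightarrow> S t f \<le> D * Np f"
  unfolding S_def using G_ne by (intro cSUP_least) (auto intro: D_bound G_sm)

lemma S_lower: "f \<in> V \<Longrightarrow> Np f \<le> D * S t f"
proof -
  assume f: "f \<in> V"
  have "Np f \<le> D * Np (R (\<lambda>n. Suc t * Suc n) f)" using D_bound(2)[OF f G_sm[OF G_ne]] .
  also have "\<dots> \<le> D * S t f" using D_ge1 S_ge[OF f G_ne] by (intro mult_left_mono) auto
  finally show ?thesis .
qed

lemma S_nonneg: "f \<in> V \<Longrightarrow> 0 \<le> S t f"
  using S_ge[OF _ G_ne] Np_nonneg order_trans by blast

lemma S_anti: "f \<in> V \<Longrightarrow> t \<le> t' \<Longrightarrow> S t' f \<le> S t f"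
  unfolding S_def using G_ne[of t' f] G_anti[of t t' f] by (intro cSUP_subset_mono) (auto intro: S_bdd)

lemma S_lim: "f \<in> V \<Longrightarrow> (\<lambda>t. S t f) \<longlonglongrightarrow> N1 f \<and> (\<forall>t. N1 f \<le> S t f)"
proof -
  assume f: "f \<in> V"
  have "decseq (\<lambda>t. S t f)" using S_anti[OF f] by (simp add: decseq_def)
  then obtain L where L: "(\<lambda>t. S t f) \<longlonglongrightarrow> L" "\<forall>i. L \<le> S i f"
    using decseq_convergent[of "\<lambda>t. S t f" 0] S_nonneg[OF f] by blast
  have "N1 f = L" unfolding N1_def using L(1) by (rule limI)
  then show ?thesis using L by simp
qed

lemma N1_lower: "f \<in> V \<Longrightarrow> Np f \<le> D * N1 f"
proof -
  assume f: "f \<in> V"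
  have "(\<lambda>t. D * S t f) \<longlonglongrightarrow> D * N1 f" using S_lim[OF f] by (intro tendsto_intros) simp
  then show ?thesis by (rule LIMSEQ_le_const) (use S_lower[OF f] in auto)
qed

lemma N1_upper: "f \<in> V \<Longrightarrow> N1 f \<le> D * Np f"
  using S_lim S_upper order_trans by blast

lemma N1_nonneg: "f \<in> V \<Longrightarrow> 0 \<le> N1 f"
proof -
  assume f: "f \<in> V"
  show ?thesis by (rule LIMSEQ_le_const[OF conjunct1[OF S_lim[OF f]]]) (use S_nonneg[OF f] in auto)
qed

lemma supp_scale_eq: "c \<noteq> 0 \<Longrightarrow> supp (sc c f) = supp f"
  by (auto simp: supp_def xs_scale)

lemma S_scale: "f \<in> V \<Longrightarrow> S t (sc c f) = norm c * S t f"
proof (cases "c = 0")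
  case True
  then show ?thesis by (simp add: S_def G_def Np_zero)
next
  case False
  assume f: "f \<in> V"
  have Gs: "G t (sc c f) = G t f" using False by (simp add: G_def supp_scale_eq)
  have val: "Np (R \<rho> (sc c f)) = norm c * Np (R \<rho> f)" for \<rho>
    using R_scale[OF f] Np_scale by simp
  have scV: "sc c f \<in> V" using f by (simp add: V_def span_scale)
  have "S t (sc c f) \<le> norm c * S t f"
    unfolding S_def[of t "sc c f"] Gs val using G_ne
    by (intro cSUP_least) (auto intro!: mult_left_mono S_ge[OF f])
  moreover have "S t f \<le> S t (sc c f) / norm c"
    unfolding S_def[of t f] using G_ne False
  proof (intro cSUP_least)
    fix \<rho> assume "\<rho> \<in> G t f"
    then have "Np (R \<rho> (sc c f)) \<le> S t (sc c f)" using S_ge[OF scV] Gs by simp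
    then show "Np (R \<rho> f) \<le> S t (sc c f) / norm c" using False by (simp add: val field_simps)
  qed auto
  then have "norm c * S t f \<le> S t (sc c f)" using False by (simp add: field_simps)
  ultimately show ?thesis by simp
qed

lemma N1_scale: "f \<in> V \<Longrightarrow> N1 (sc c f) = norm c * N1 f"
proof -
  assume f: "f \<in> V"
  have scV: "sc c f \<in> V" using f by (simp add: V_def span_scale)
  have "(\<lambda>t. S t (sc c f)) \<longlonglongrightarrow> norm c * N1 f"
    using S_lim[OF f] by (simp add: S_scale[OF f] tendsto_intros)
  moreover have "(\<lambda>t. S t (sc c f)) \<longlonglongrightarrow> N1 (sc c f)" using S_lim[OF scV] by simp
  ultimately show ?thesis using LIMSEQ_unique by blast
qed

end

lemma spread_ext:
  fixes \<rho> :: "nat \<Rightarrow> nat"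
  assumes finU: "finite U" and WU: "W \<subseteq> U"
    and st: "\<And>w. w \<in> W \<Longrightarrow> T * card U \<le> \<rho> w"
    and gap: "\<And>w w'. w \<in> W \<Longrightarrow> w' \<in> W \<Longrightarrow> w < w' \<Longrightarrow> \<rho> w + T * card U \<le> \<rho> w'"
  shows "\<exists>\<sigma>. (\<forall>w\<in>W. \<sigma> w = \<rho> w) \<and> (\<forall>u\<in>U. T \<le> \<sigma> u) \<and> (\<forall>u\<in>U. \<forall>u'\<in>U. u < u' \<longrightarrow> \<sigma> u + T \<le> \<sigma> u')"
proof -
  define c where "c u = card {v\<in>U. v \<le> u}" for u
  define d where "d w u = card {v\<in>U. w < v \<and> v \<le> u}" for w u
  define A where "A u = insert (T * c u) ((\<lambda>w. \<rho> w + T * d w u) ` {w\<in>W. w \<le> u})" for u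
  define \<sigma> where "\<sigma> u = Max (A u)" for u
  have finW: "finite W" using finU WU finite_subset by blast
  have finA: "finite (A u)" for u using finW by (simp add: A_def)
  have ge: "y \<le> \<sigma> u" if "y \<in> A u" for y u using finA that by (simp add: \<sigma>_def)
  have cU: "c u \<le> card U" for u unfolding c_def using finU by (intro card_mono) auto
  have dU: "d w u \<le> card U" for w u unfolding d_def using finU by (intro card_mono) auto
  have "T \<le> \<sigma> u" if "u \<in> U" for u
  proof -
    have "0 < c u" unfolding c_def using that finU by (subst card_gt_0_iff) auto
    then have "1 \<le> c u" by simp
    then have "T \<le> T * c u" by simp
    also have "\<dots> \<le> \<sigma> u" by (intro ge) (simp add: A_def)
    finally show ?thesis .
  qed
  moreover have "\<sigma> u + T \<le> \<sigma> u'" if u: "u \<in> U" "u' \<in> U" "u < u'" for u u'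
  proof -
    have "\<sigma> u \<in> A u" unfolding \<sigma>_def by (intro Max_in finA) (simp add: A_def)
    then consider "\<sigma> u = T * c u" | w where "w \<in> W" "w \<le> u" "\<sigma> u = \<rho> w + T * d w u"
      unfolding A_def by blast
    then show ?thesis
    proof cases
      case 1
      have s1: "{v\<in>U. v \<le> u} \<subseteq> {v\<in>U. v \<le> u'}" using u by auto
      have s2: "u' \<in> {v\<in>U. v \<le> u'} - {v\<in>U. v \<le> u}" using u by auto
      from s1 s2 have "{v\<in>U. v \<le> u} \<subset> {v\<in>U. v \<le> u'}" by blast
      then have "c u < c u'" unfolding c_def using finU by (intro psubset_card_mono) auto
      then have "T * Suc (c u) \<le> T * c u'" by (intro mult_le_mono2) simp
      then have "T * c u + T \<le> T * c u'" by simp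
      also have "\<dots> \<le> \<sigma> u'" by (intro ge) (simp add: A_def)
      finally show ?thesis using 1 by simp
    next
      case 2
      have s1: "{v\<in>U. w < v \<and> v \<le> u} \<subseteq> {v\<in>U. w < v \<and> v \<le> u'}" using u by auto
      have s2: "u' \<in> {v\<in>U. w < v \<and> v \<le> u'} - {v\<in>U. w < v \<and> v \<le> u}" using u 2 by simp
      from s1 s2 have "{v\<in>U. w < v \<and> v \<le> u} \<subset> {v\<in>U. w < v \<and> v \<le> u'}" by blast
      then have "d w u < d w u'" unfolding d_def using finU by (intro psubset_card_mono) auto
      then have "T * Suc (d w u) \<le> T * d w u'" by (intro mult_le_mono2) simp
      then have "T * d w u + T \<le> T * d w u'" by simp
      then have "\<sigma> u + T \<le> \<rho> w + T * d w u'" using 2 by simp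
      also have "\<dots> \<le> \<sigma> u'"
      proof (intro ge)
        have "w \<in> {w\<in>W. w \<le> u'}" using 2 u by simp
        then show "\<rho> w + T * d w u' \<in> A u'" unfolding A_def by (intro insertI2 imageI)
      qed
      finally show ?thesis .
    qed
  qed
  moreover have "\<sigma> w = \<rho> w" if w: "w \<in> W" for w
    unfolding \<sigma>_def
  proof (rule Max_eqI)
    show "finite (A w)" by (rule finA)
    have "d w w = 0" by (simp add: d_def)
    moreover have "w \<in> {w'\<in>W. w' \<le> w}" using w by simp
    then have "\<rho> w + T * d w w \<in> A w" unfolding A_def by (intro insertI2 imageI)
    ultimately show "\<rho> w \<in> A w" by simp
    fix y assume "y \<in> A w"
    then consider "y = T * c w" | w' where "w' \<in> W" "w' \<le> w" "y = \<rho> w' + T * d w' w"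
      unfolding A_def by blast
    then show "y \<le> \<rho> w"
    proof cases
      case 1
      have "T * c w \<le> T * card U" by (intro mult_le_mono2 cU)
      then show ?thesis using 1 st[OF w] by linarith
    next
      case 2
      show ?thesis
      proof (cases "w' = w")
        case True
        then have "d w' w = 0" by (simp add: d_def)
        then show ?thesis using 2 True by simp
      next
        case False
        then have "w' < w" using 2 by simp
        have "T * d w' w \<le> T * card U" by (intro mult_le_mono2 dU)
        then show ?thesis using 2 gap[OF 2(1) w \<open>w' < w\<close>] by linarith
      qed
    qed
  qed
  ultimately show ?thesis by blast
qed

context sb3
begin

lemma S_tri:
  assumes f: "f \<in> V" and h: "h \<in> V"
  shows "S (Suc t' * card (supp f \<union> supp h)) (f + h) powr p \<le> S t' f powr p + S t' h powr p"
proof -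
  define U where "U = supp f \<union> supp h"
  define t where "t = Suc t' * card U"
  define B where "B = S t' f powr p + S t' h powr p"
  have B0: "0 \<le> B" by (simp add: B_def)
  have finU: "finite U" using V_fin f h by (simp add: U_def)
  have fh: "f + h \<in> V" using f h by (simp add: V_def span_add)
  have "S t (f + h) \<le> B powr (1 / p)"
    unfolding S_def using G_ne
  proof (intro cSUP_least)
    fix \<rho> assume \<rho>: "\<rho> \<in> G t (f + h)"
    obtain \<sigma> where \<sigma>: "\<forall>w\<in>supp (f + h). \<sigma> w = \<rho> w" "\<forall>u\<in>U. Suc t' \<le> \<sigma> u"
        "\<forall>u\<in>U. \<forall>u'\<in>U. u < u' \<longrightarrow> \<sigma> u + Suc t' \<le> \<sigma> u'"
    proof -
      have "\<exists>\<sigma>. (\<forall>w\<in>supp (f + h). \<sigma> w = \<rho> w) \<and> (\<forall>u\<in>U. Suc t' \<le> \<sigma> u) \<and>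
               (\<forall>u\<in>U. \<forall>u'\<in>U. u < u' \<longrightarrow> \<sigma> u + Suc t' \<le> \<sigma> u')"
      proof (rule spread_ext[OF finU])
        show "supp (f + h) \<subseteq> U" using supp_add by (simp add: U_def)
        show "Suc t' * card U \<le> \<rho> w" if "w \<in> supp (f + h)" for w
        proof -
          have "Suc t \<le> \<rho> w" using \<rho> that unfolding G_def by blast
          then show ?thesis by (simp add: t_def)
        qed
        show "\<rho> w + Suc t' * card U \<le> \<rho> w'" if "w \<in> supp (f + h)" "w' \<in> supp (f + h)" "w < w'" for w w'
        proof -
          have "\<rho> w + Suc t \<le> \<rho> w'" using \<rho> that unfolding G_def by blast
          then show ?thesis by (simp add: t_def)
        qed
      qed
      then show ?thesis using that by blast
    qed
    have \<sigma>f: "\<sigma> \<in> G t' f" and \<sigma>h: "\<sigma> \<in> G t' h" using \<sigma>(2,3) by (auto simp: G_def U_def)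
    have "R \<rho> (f + h) = R \<sigma> (f + h)" using \<sigma>(1) by (intro R_cong) simp
    also have "\<dots> = R \<sigma> f + R \<sigma> h" by (rule R_add[OF f h])
    finally have eq: "R \<rho> (f + h) = R \<sigma> f + R \<sigma> h" .
    have "Np (R \<rho> (f + h)) powr p \<le> Np (R \<sigma> f) powr p + Np (R \<sigma> h) powr p"
      unfolding eq by (rule Np_tri)
    also have "\<dots> \<le> B" unfolding B_def using p_pos Np_nonneg
      by (intro add_mono powr_mono2 S_ge \<sigma>f \<sigma>h f h) auto
    finally have "(Np (R \<rho> (f + h)) powr p) powr (1 / p) \<le> B powr (1 / p)"
      using p_pos by (intro powr_mono2) auto
    then show "Np (R \<rho> (f + h)) \<le> B powr (1 / p)"
      using p_pos Np_nonneg by (simp add: powr_powr powr_one)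
  qed auto
  then have "S t (f + h) powr p \<le> (B powr (1 / p)) powr p"
    using p_pos S_nonneg[OF fh] by (intro powr_mono2) auto
  also have "\<dots> = B" using p_pos B0 by (simp add: powr_powr powr_one)
  finally show ?thesis by (simp add: t_def U_def B_def)
qed

lemma N1_tri:
  assumes f: "f \<in> V" and h: "h \<in> V"
  shows "N1 (f + h) powr p \<le> N1 f powr p + N1 h powr p"
proof -
  have fh: "f + h \<in> V" using f h by (simp add: V_def span_add)
  have lim: "(\<lambda>t. S t f powr p + S t h powr p) \<longlonglongrightarrow> N1 f powr p + N1 h powr p"
    using S_lim[OF f] S_lim[OF h] S_nonneg[OF f] S_nonneg[OF h] p_pos
    by (intro tendsto_intros) auto
  show ?thesis
  proof (rule LIMSEQ_le_const[OF lim], intro exI allI impI)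
    fix t :: nat
    have "N1 (f + h) \<le> S (Suc t * card (supp f \<union> supp h)) (f + h)" using S_lim[OF fh] by blast
    then have "N1 (f + h) powr p \<le> S (Suc t * card (supp f \<union> supp h)) (f + h) powr p"
      using p_pos N1_nonneg[OF fh] by (intro powr_mono2) auto
    also have "\<dots> \<le> S t f powr p + S t h powr p" by (rule S_tri[OF f h])
    finally show "N1 (f + h) powr p \<le> S t f powr p + S t h powr p" .
  qed
qed

lemma strict_mono_on_inv:
  fixes \<psi> :: "nat \<Rightarrow> nat"
  assumes "strict_mono_on A \<psi>"
  shows "strict_mono_on (\<psi> ` A) (inv_into A \<psi>)"
proof (rule strict_mono_onI)
  fix a b assume ab: "a \<in> \<psi> ` A" "b \<in> \<psi> ` A" "a < b"
  then obtain n m where nm: "n \<in> A" "m \<in> A" "a = \<psi> n" "b = \<psi> m" by auto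
  have inj: "inj_on \<psi> A" using assms strict_mono_on_imp_inj_on by blast
  have "n < m"
  proof (rule ccontr)
    assume "\<not> n < m"
    then have "m \<le> n" by simp
    then have "\<psi> m \<le> \<psi> n" using strict_mono_onD[OF assms nm(2) nm(1)] by (cases "m = n") auto
    then show False using ab nm by simp
  qed
  then show "inv_into A \<psi> a < inv_into A \<psi> b" using nm inj by simp
qed

lemma S_reloc:
  assumes f: "f \<in> V" and \<psi>: "strict_mono_on (supp f) \<psi>"
  shows "S t (R \<psi> f) \<le> S t f"
proof -
  have inj: "inj_on \<psi> (supp f)" using \<psi> strict_mono_on_imp_inj_on by blast
  have sR: "supp (R \<psi> f) = \<psi> ` supp f" by (rule supp_R[OF f inj])
  show ?thesis
    unfolding S_def[of t "R \<psi> f"] using G_ne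
  proof (intro cSUP_least)
    fix \<rho> assume \<rho>: "\<rho> \<in> G t (R \<psi> f)"
    have "\<rho> \<circ> \<psi> \<in> G t f"
    proof -
      have "Suc t \<le> \<rho> (\<psi> n)" if "n \<in> supp f" for n
      proof -
        have "\<psi> n \<in> supp (R \<psi> f)" using that sR by simp
        then show ?thesis using \<rho> unfolding G_def by blast
      qed
      moreover have "\<rho> (\<psi> n) + Suc t \<le> \<rho> (\<psi> m)" if "n \<in> supp f" "m \<in> supp f" "n < m" for n m
      proof -
        have "\<psi> n < \<psi> m" using strict_mono_onD[OF \<psi> that] .
        moreover have "\<psi> n \<in> supp (R \<psi> f)" "\<psi> m \<in> supp (R \<psi> f)" using that sR by simp_all
        ultimately show ?thesis using \<rho> unfolding G_def by blast
      qed
      ultimately show ?thesis unfolding G_def by simp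
    qed
    then show "Np (R \<rho> (R \<psi> f)) \<le> S t f" using R_comp[OF f inj] S_ge[OF f] by simp
  qed auto
qed

lemma N1_reloc_le:
  assumes f: "f \<in> V" and \<psi>: "strict_mono_on (supp f) \<psi>"
  shows "N1 (R \<psi> f) \<le> N1 f"
  using S_lim[OF f] S_lim[OF R_V, of \<psi> f] S_reloc[OF f \<psi>]
  by (intro LIMSEQ_le[of "\<lambda>t. S t (R \<psi> f)" _ "\<lambda>t. S t f"]) auto

lemma N1_reloc:
  assumes f: "f \<in> V" and \<psi>: "strict_mono_on (supp f) \<psi>"
  shows "N1 (R \<psi> f) = N1 f"
proof -
  have inj: "inj_on \<psi> (supp f)" using \<psi> strict_mono_on_imp_inj_on by blast
  have sR: "supp (R \<psi> f) = \<psi> ` supp f" by (rule supp_R[OF f inj])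
  let ?\<psi>' = "inv_into (supp f) \<psi>"
  have sm': "strict_mono_on (supp (R \<psi> f)) ?\<psi>'" using strict_mono_on_inv[OF \<psi>] sR by simp
  have "R ?\<psi>' (R \<psi> f) = R (?\<psi>' \<circ> \<psi>) f" by (rule R_comp[OF f inj])
  also have "\<dots> = R id f" using inj by (intro R_cong) simp
  also have "\<dots> = f" by (rule R_id[OF f])
  finally have "N1 f = N1 (R ?\<psi>' (R \<psi> f))" by simp
  also have "\<dots> \<le> N1 (R \<psi> f)" by (rule N1_reloc_le[OF R_V sm'])
  finally show ?thesis using N1_reloc_le[OF f \<psi>] by simp
qed

end

context sb3
begin

definition Q where "Q f = Inf ((\<lambda>g. N1 g powr p + (D * Np (f - g)) powr p) ` V)"
definition N2 where "N2 f = Q f powr (1 / p)"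

lemma zero_V: "0 \<in> V" by (simp add: V_def span_zero)
lemma add_V: "f \<in> V \<Longrightarrow> g \<in> V \<Longrightarrow> f + g \<in> V" by (simp add: V_def span_add)
lemma diff_V: "f \<in> V \<Longrightarrow> g \<in> V \<Longrightarrow> f - g \<in> V" by (simp add: V_def span_diff)
lemma scale_V: "f \<in> V \<Longrightarrow> sc c f \<in> V" by (simp add: V_def span_scale)

lemma Q_bdd: "bdd_below ((\<lambda>g. N1 g powr p + (D * Np (f - g)) powr p) ` V)"
  by (rule bdd_belowI2[of _ 0]) auto

lemma Q_le: "g \<in> V \<Longrightarrow> Q f \<le> N1 g powr p + (D * Np (f - g)) powr p"
  unfolding Q_def by (rule cInf_lower) (auto intro: Q_bdd)

lemma Q_ge: "(\<And>g. g \<in> V \<Longrightarrow> B \<le> N1 g powr p + (D * Np (f - g)) powr p) \<Longrightarrow> B \<le> Q f"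
  unfolding Q_def using zero_V by (intro cInf_greatest) auto

lemma Q_nonneg: "0 \<le> Q f"
  by (rule Q_ge) auto

lemma N1_0: "N1 0 = 0"
  using N1_scale[OF zero_V, of 0] by simp

lemma Np_0: "Np 0 = 0" using Np_zero by simp

lemma powr_mult_D: "0 \<le> a \<Longrightarrow> (D * a) powr p = D powr p * a powr p"
  using D_ge1 by (simp add: powr_mult)

lemma Q_V: "f \<in> V \<Longrightarrow> Q f = N1 f powr p"
proof (rule antisym)
  assume f: "f \<in> V"
  show "Q f \<le> N1 f powr p" using Q_le[OF f, of f] p_pos by (simp add: Np_0)
  show "N1 f powr p \<le> Q f"
  proof (rule Q_ge)
    fix g assume g: "g \<in> V"
    have "N1 f powr p = N1 (g + (f - g)) powr p" by simp
    also have "\<dots> \<le> N1 g powr p + N1 (f - g) powr p" by (rule N1_tri[OF g diff_V[OF f g]])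
    also have "N1 (f - g) powr p \<le> (D * Np (f - g)) powr p"
      using p_pos N1_upper[OF diff_V[OF f g]] N1_nonneg[OF diff_V[OF f g]] by (intro powr_mono2) auto
    finally show "N1 f powr p \<le> N1 g powr p + (D * Np (f - g)) powr p" by simp
  qed
qed

lemma N2_pow: "N2 f powr p = Q f"
  unfolding N2_def using p_pos Q_nonneg by (simp add: powr_powr powr_one)

lemma N2_V: "f \<in> V \<Longrightarrow> N2 f = N1 f"
  unfolding N2_def using Q_V p_pos N1_nonneg by (simp add: powr_powr powr_one)

lemma N2_nonneg: "0 \<le> N2 f" by (simp add: N2_def)

lemma Q_tri: "Q (f + h) \<le> Q f + Q h"
proof -
  have main: "Q (f + h) \<le> (N1 g1 powr p + (D * Np (f - g1)) powr p) + (N1 g2 powr p + (D * Np (h - g2)) powr p)"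
    if g1: "g1 \<in> V" and g2: "g2 \<in> V" for g1 g2
  proof -
    have "Q (f + h) \<le> N1 (g1 + g2) powr p + (D * Np (f + h - (g1 + g2))) powr p"
      by (rule Q_le[OF add_V[OF g1 g2]])
    also have "N1 (g1 + g2) powr p \<le> N1 g1 powr p + N1 g2 powr p" by (rule N1_tri[OF g1 g2])
    also have "(D * Np (f + h - (g1 + g2))) powr p = D powr p * Np ((f - g1) + (h - g2)) powr p"
      by (simp add: powr_mult_D Np_nonneg algebra_simps)
    also have "\<dots> \<le> D powr p * (Np (f - g1) powr p + Np (h - g2) powr p)"
      by (intro mult_left_mono Np_tri) simp
    also have "\<dots> = (D * Np (f - g1)) powr p + (D * Np (h - g2)) powr p"
      using powr_mult_D[OF Np_nonneg[of "f - g1"]] powr_mult_D[OF Np_nonneg[of "h - g2"]]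
      by (simp add: distrib_left)
    finally show ?thesis by simp
  qed
  have step1: "Q (f + h) - (N1 g2 powr p + (D * Np (h - g2)) powr p) \<le> Q f" if g2: "g2 \<in> V" for g2
  proof (rule Q_ge)
    fix g assume g: "g \<in> V"
    show "Q (f + h) - (N1 g2 powr p + (D * Np (h - g2)) powr p) \<le> N1 g powr p + (D * Np (f - g)) powr p"
      using main[OF g g2] by linarith
  qed
  have "Q (f + h) - Q f \<le> Q h"
  proof (rule Q_ge)
    fix g assume g: "g \<in> V"
    show "Q (f + h) - Q f \<le> N1 g powr p + (D * Np (h - g)) powr p"
      using step1[OF g] by linarith
  qed
  then show ?thesis by simp
qed

lemma N2_tri: "N2 (f + h) powr p \<le> N2 f powr p + N2 h powr p"
  using Q_tri by (simp add: N2_pow)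

lemma Q_scale_le: "Q (sc c f) \<le> norm c powr p * Q f"
proof (cases "c = 0")
  case True
  then show ?thesis using Q_V[OF zero_V] N1_0 p_pos by simp
next
  case False
  have "Q (sc c f) / norm c powr p \<le> N1 g powr p + (D * Np (f - g)) powr p" if g: "g \<in> V" for g
  proof -
    have "Q (sc c f) \<le> N1 (sc c g) powr p + (D * Np (sc c f - sc c g)) powr p"
      by (rule Q_le[OF scale_V[OF g]])
    also have "\<dots> = norm c powr p * (N1 g powr p + (D * Np (f - g)) powr p)"
    proof -
      have e1: "N1 (sc c g) powr p = norm c powr p * N1 g powr p"
        using N1_nonneg[OF g] by (simp add: N1_scale[OF g] powr_mult)
      have "D * Np (sc c f - sc c g) = norm c * (D * Np (f - g))"
        by (simp add: scale_right_diff_distrib[symmetric] Np_scale)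
      then have e2: "(D * Np (sc c f - sc c g)) powr p = norm c powr p * (D * Np (f - g)) powr p"
        using D_ge1 Np_nonneg[of "f - g"] by (simp add: powr_mult)
      show ?thesis unfolding e1 e2 by (simp add: distrib_left)
    qed
    finally show ?thesis using False by (simp add: field_simps)
  qed
  then have "Q (sc c f) / norm c powr p \<le> Q f" by (rule Q_ge)
  then show ?thesis using False by (simp add: field_simps)
qed

lemma Q_scale: "Q (sc c f) = norm c powr p * Q f"
proof (cases "c = 0")
  case True
  then show ?thesis using Q_scale_le[of c f] Q_nonneg[of "sc c f"] p_pos by simp
next
  case False
  have "Q f = Q (sc (inverse c) (sc c f))" using False by simp
  also have "\<dots> \<le> norm (inverse c) powr p * Q (sc c f)" by (rule Q_scale_le)
  also have "norm (inverse c) powr p = 1 / norm c powr p"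
  proof -
    have "norm (inverse c) = 1 / norm c" by (simp add: norm_inverse divide_inverse)
    moreover have "(1 / norm c) powr p = 1 / norm c powr p" by (simp add: powr_divide)
    ultimately show ?thesis by simp
  qed
  finally have "Q f \<le> Q (sc c f) / norm c powr p" by simp
  then have "norm c powr p * Q f \<le> Q (sc c f)"
    using False by (simp add: pos_le_divide_eq mult.commute)
  then show ?thesis using Q_scale_le[of c f] by simp
qed

lemma N2_scale: "N2 (sc c f) = norm c * N2 f"
  unfolding N2_def Q_scale using p_pos Q_nonneg
  by (simp add: powr_mult powr_powr powr_one)

lemma N2_upper: "N2 f \<le> D * Np f"
proof -
  have "Q f \<le> (D * Np f) powr p" using Q_le[OF zero_V, of f] N1_0 p_pos by simp
  then have "Q f powr (1/p) \<le> ((D * Np f) powr p) powr (1/p)"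
    using Q_nonneg p_pos by (intro powr_mono2) auto
  then show ?thesis using p_pos D_ge1 Np_nonneg by (simp add: N2_def powr_powr powr_one)
qed

lemma N2_lower: "Np f \<le> D * N2 f"
proof -
  have "(Np f / D) powr p \<le> Q f"
  proof (rule Q_ge)
    fix g assume g: "g \<in> V"
    have D0: "0 < D" using D_ge1 by simp
    have "(Np f / D) powr p = (1/D) powr p * Np (g + (f - g)) powr p"
      using D0 Np_nonneg by (simp add: powr_divide powr_mult)
    also have "\<dots> \<le> (1/D) powr p * (Np g powr p + Np (f - g) powr p)"
      by (intro mult_left_mono Np_tri) simp
    also have "\<dots> = (Np g / D) powr p + (Np (f - g) / D) powr p"
      using D0 Np_nonneg by (simp add: powr_divide algebra_simps)
    also have "(Np g / D) powr p \<le> N1 g powr p"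
      using N1_lower[OF g] D0 p_pos Np_nonneg by (intro powr_mono2) (auto simp: field_simps)
    also have "(Np (f - g) / D) powr p \<le> (D * Np (f - g)) powr p"
    proof (intro powr_mono2)
      have "Np (f - g) / D \<le> Np (f - g)" using divide_left_mono[OF D_ge1 Np_nonneg[of "f - g"]] D_ge1 by simp
      also have "\<dots> \<le> D * Np (f - g)" using mult_right_mono[OF D_ge1 Np_nonneg[of "f - g"]] by simp
      finally show "Np (f - g) / D \<le> D * Np (f - g)" .
    qed (use p_pos D0 Np_nonneg in auto)
    finally show "(Np f / D) powr p \<le> N1 g powr p + (D * Np (f - g)) powr p" by simp
  qed
  then have "((Np f / D) powr p) powr (1/p) \<le> Q f powr (1/p)"
    using p_pos by (intro powr_mono2) auto
  then have "Np f / D \<le> N2 f" using p_pos D_ge1 Np_nonneg by (simp add: N2_def powr_powr powr_one)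
  then show ?thesis using D_ge1 by (simp add: field_simps)
qed

lemma N2_zero: "N2 f = 0 \<longleftrightarrow> f = 0"
proof
  assume "N2 f = 0"
  then have "Np f \<le> 0" using N2_lower[of f] by simp
  then show "f = 0" using Np_nonneg[of f] Np_zero by simp
next
  assume "f = 0"
  then show "N2 f = 0" using N2_upper[of 0] N2_nonneg[of 0] Np_0 by simp
qed

end

context sb3
begin

lemma Q_pow: "Q u = N2 u powr p" using N2_pow by simp

lemma Q_zero: "Q u = 0 \<longleftrightarrow> u = 0"
  using N2_zero[of u] N2_nonneg[of u] by (simp add: Q_pow)

lemma Q_neg: "Q (- u) = Q u"
proof -
  have "- u = sc (-1) u" by simp
  then show ?thesis using Q_scale[of "-1" u] by simp
qed

lemma Q_sym: "Q (u - v) = Q (v - u)"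
  using Q_neg[of "u - v"] by simp

lemma Q_tri3: "Q (a - c) \<le> Q (a - b) + Q (b - c)"
  using Q_tri[of "a - b" "b - c"] by simp

lemma N2_less_iff: "0 < e \<Longrightarrow> N2 z < e \<longleftrightarrow> Q z < e powr p"
proof
  assume e: "0 < e" and "N2 z < e"
  then show "Q z < e powr p" unfolding Q_pow using p_pos N2_nonneg by (intro powr_less_mono2) auto
next
  assume e: "0 < e" and l: "Q z < e powr p"
  show "N2 z < e"
  proof (rule ccontr)
    assume "\<not> N2 z < e"
    then have "e powr p \<le> N2 z powr p" using e p_pos by (intro powr_mono2) auto
    then show False using l Q_pow by simp
  qed
qed

lemma qcl_Q: "qclosure N2 Y = {f. \<forall>e>0. \<exists>a\<in>Y. Q (f - a) < e}"
proof -
  have "(\<forall>e>0. \<exists>a\<in>Y. N2 (f - a) < e) \<longleftrightarrow> (\<forall>e>0. \<exists>a\<in>Y. Q (f - a) < e)" for f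
  proof
    assume H: "\<forall>e>0. \<exists>a\<in>Y. N2 (f - a) < e"
    show "\<forall>e>0. \<exists>a\<in>Y. Q (f - a) < e"
    proof (intro allI impI)
      fix e :: real assume e: "0 < e"
      then have e': "0 < e powr (1/p)" by simp
      obtain a where "a \<in> Y" "N2 (f - a) < e powr (1/p)" using H e' by blast
      then have "Q (f - a) < (e powr (1/p)) powr p" using N2_less_iff[OF e'] by simp
      also have "\<dots> = e" using e p_pos by (simp add: powr_powr)
      finally show "\<exists>a\<in>Y. Q (f - a) < e" using \<open>a \<in> Y\<close> by blast
    qed
  next
    assume H: "\<forall>e>0. \<exists>a\<in>Y. Q (f - a) < e"
    show "\<forall>e>0. \<exists>a\<in>Y. N2 (f - a) < e"
    proof (intro allI impI)
      fix e :: real assume e: "0 < e"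
      have "0 < e powr p" using e by simp
      then obtain a where "a \<in> Y" "Q (f - a) < e powr p" using H by blast
      then show "\<exists>a\<in>Y. N2 (f - a) < e" using N2_less_iff[OF e] by blast
    qed
  qed
  then show ?thesis unfolding qclosure_def by blast
qed

definition good_map where
  "good_map A0 T0 \<longleftrightarrow> (\<forall>a\<in>A0. \<forall>a'\<in>A0. a - a' \<in> A0 \<and> T0 (a - a') = T0 a - T0 a') \<and> (\<forall>a\<in>A0. Q (T0 a) = Q a)"

definition lp where
  "lp A0 T0 f y \<longleftrightarrow> (\<forall>e>0. \<exists>a\<in>A0. Q (f - a) < e \<and> Q (y - T0 a) < e)"

lemma small_zero: "(\<And>e. 0 < e \<Longrightarrow> Q u < e) \<Longrightarrow> u = 0"
proof -
  assume H: "\<And>e. 0 < e \<Longrightarrow> Q u < e"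
  have "Q u \<le> 0"
  proof (rule ccontr)
    assume "\<not> Q u \<le> 0"
    then have "0 < Q u" by simp
    from H[OF this] show False by simp
  qed
  then show ?thesis using Q_nonneg[of u] Q_zero by simp
qed

lemma lp_unique:
  assumes g: "good_map A0 T0" and y: "lp A0 T0 f y" and y': "lp A0 T0 f y'"
  shows "y = y'"
proof -
  have "Q (y - y') < e" if e: "0 < e" for e
  proof -
    have e4: "0 < e / 4" using e by simp
    obtain a where a: "a \<in> A0" "Q (f - a) < e / 4" "Q (y - T0 a) < e / 4" using y e4 unfolding lp_def by blast
    obtain a' where a': "a' \<in> A0" "Q (f - a') < e / 4" "Q (y' - T0 a') < e / 4" using y' e4 unfolding lp_def by blast
    have "Q (T0 a - T0 a') = Q (a - a')" using g a(1) a'(1) unfolding good_map_def by metis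
    also have "\<dots> \<le> Q (a - f) + Q (f - a')" by (rule Q_tri3)
    also have "\<dots> < e / 2" using a(2) a'(2) Q_sym[of a f] by simp
    finally have m: "Q (T0 a - T0 a') < e / 2" .
    have "Q (y - y') \<le> Q (y - T0 a) + Q (T0 a - y')" by (rule Q_tri3)
    also have "Q (T0 a - y') \<le> Q (T0 a - T0 a') + Q (T0 a' - y')" by (rule Q_tri3)
    finally have "Q (y - y') \<le> Q (y - T0 a) + (Q (T0 a - T0 a') + Q (y' - T0 a'))"
      using Q_sym[of "T0 a'" y'] by simp
    then show ?thesis using a(3) a'(3) m by simp
  qed
  then have "y - y' = 0" by (rule small_zero)
  then show ?thesis by simp
qed

lemma lp_exists:
  assumes compl: "qcomplete Q" and g: "good_map A0 T0" and f: "f \<in> qclosure N2 A0"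
  shows "\<exists>y. lp A0 T0 f y"
proof -
  have "\<forall>n. \<exists>a. a \<in> A0 \<and> Q (f - a) < inverse (real (Suc n))"
  proof
    fix n
    have "0 < inverse (real (Suc n))" by simp
    then show "\<exists>a. a \<in> A0 \<and> Q (f - a) < inverse (real (Suc n))" using f unfolding qcl_Q by blast
  qed
  then obtain a where a0: "\<forall>n. a n \<in> A0 \<and> Q (f - a n) < inverse (real (Suc n))"
    by (rule choice[THEN exE])
  have a: "\<And>n. a n \<in> A0" "\<And>n. Q (f - a n) < inverse (real (Suc n))" using a0 by blast+
  have inv_mono: "inverse (real (Suc m)) \<le> inverse (real (Suc M))" if "M \<le> m" for m M
    using that by (simp add: field_simps)
  have cauchy: "\<forall>e>0. \<exists>M. \<forall>m\<ge>M. \<forall>n\<ge>M. Q (T0 (a m) - T0 (a n)) < e"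
  proof (intro allI impI)
    fix e :: real assume e: "e > 0"
    obtain M where M: "inverse (real (Suc M)) < e / 2" using reals_Archimedean[of "e/2"] e by auto
    have "Q (T0 (a m) - T0 (a n)) < e" if "m \<ge> M" "n \<ge> M" for m n
    proof -
      have "Q (T0 (a m) - T0 (a n)) = Q (a m - a n)" using g a(1) unfolding good_map_def by metis
      also have "\<dots> \<le> Q (a m - f) + Q (f - a n)" by (rule Q_tri3)
      also have "\<dots> < e"
      proof -
        have i1: "inverse (real (Suc m)) \<le> inverse (real (Suc M))" using inv_mono[OF that(1)] .
        have i2: "inverse (real (Suc n)) \<le> inverse (real (Suc M))" using inv_mono[OF that(2)] .
        have q1: "Q (a m - f) < inverse (real (Suc m))" using a(2)[of m] Q_sym[of "a m" f] by simp
        have q2: "Q (f - a n) < inverse (real (Suc n))" using a(2)[of n] .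
        have s1: "Q (a m - f) < inverse (real (Suc M))" using q1 i1 by (rule less_le_trans)
        have s2: "Q (f - a n) < inverse (real (Suc M))" using q2 i2 by (rule less_le_trans)
        show ?thesis using s1 s2 M by linarith
      qed
      finally show ?thesis .
    qed
    then show "\<exists>M. \<forall>m\<ge>M. \<forall>n\<ge>M. Q (T0 (a m) - T0 (a n)) < e" by blast
  qed
  have qc: "\<exists>y. (\<lambda>n. Q (s n - y)) \<longlonglongrightarrow> 0" if "\<forall>e>0. \<exists>M. \<forall>m\<ge>M. \<forall>n\<ge>M. Q (s m - s n) < e" for s
    using compl that unfolding qcomplete_def by blast
  obtain y where y: "(\<lambda>n. Q (T0 (a n) - y)) \<longlonglongrightarrow> 0"
    using qc[of "\<lambda>n. T0 (a n)"] cauchy by blast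
  have "lp A0 T0 f y"
    unfolding lp_def
  proof (intro allI impI)
    fix e :: real assume e: "0 < e"
    obtain M1 where M1: "\<forall>n\<ge>M1. norm (Q (T0 (a n) - y) - 0) < e" using LIMSEQ_D[OF y e] by blast
    obtain M2 where M2: "inverse (real (Suc M2)) < e" using reals_Archimedean[of e] e by auto
    define n where "n = max M1 M2"
    have n1: "M1 \<le> n" and n2: "M2 \<le> n" by (simp_all add: n_def)
    have "norm (Q (T0 (a n) - y) - 0) < e" using M1 n1 by blast
    then have "Q (T0 (a n) - y) < e" using Q_nonneg[of "T0 (a n) - y"] by simp
    then have 2: "Q (y - T0 (a n)) < e" using Q_sym[of y "T0 (a n)"] by simp
    have "Q (f - a n) < inverse (real (Suc n))" by (rule a(2))
    also have "\<dots> \<le> inverse (real (Suc M2))" by (rule inv_mono[OF n2])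
    finally have 1: "Q (f - a n) < e" using M2 by linarith
    show "\<exists>a\<in>A0. Q (f - a) < e \<and> Q (y - T0 a) < e" using a(1)[of n] 1 2 by blast
  qed
  then show ?thesis by blast
qed

lemma lp_self: "a \<in> A0 \<Longrightarrow> lp A0 T0 a (T0 a)"
  unfolding lp_def using Q_zero[of 0] by force

lemma extension:
  assumes compl: "qcomplete Q"
    and gA: "good_map A0 T0" and gB: "good_map B0 S0"
    and TB: "\<And>a. a \<in> A0 \<Longrightarrow> T0 a \<in> B0" and SA: "\<And>b. b \<in> B0 \<Longrightarrow> S0 b \<in> A0"
    and TS: "\<And>b. b \<in> B0 \<Longrightarrow> T0 (S0 b) = b"
    and Aadd: "\<And>a a'. a \<in> A0 \<Longrightarrow> a' \<in> A0 \<Longrightarrow> a + a' \<in> A0 \<and> T0 (a + a') = T0 a + T0 a'"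
    and Ascale: "\<And>c a. a \<in> A0 \<Longrightarrow> sc c a \<in> A0 \<and> T0 (sc c a) = sc c (T0 a)"
    and A0ne: "0 \<in> A0"
  shows "\<exists>T. (\<forall>a\<in>A0. T a = T0 a) \<and>
    (\<forall>u\<in>qclosure N2 A0. \<forall>v\<in>qclosure N2 A0. T (u + v) = T u + T v) \<and>
    (\<forall>c. \<forall>u\<in>qclosure N2 A0. T (sc c u) = sc c (T u)) \<and>
    bij_betw T (qclosure N2 A0) (qclosure N2 B0) \<and>
    (\<forall>u\<in>qclosure N2 A0. N2 (T u) = N2 u)"
proof -
  define T where "T f = (SOME y. lp A0 T0 f y)" for f
  have Tlp: "lp A0 T0 f (T f)" if "\<exists>y. lp A0 T0 f y" for f
    unfolding T_def using that by (rule someI_ex)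
  have Tcl: "lp A0 T0 f (T f)" if "f \<in> qclosure N2 A0" for f
    using Tlp lp_exists[OF compl gA that] by blast
  have TA: "T a = T0 a" if "a \<in> A0" for a
    using lp_unique[OF gA Tlp lp_self[OF that]] lp_self[OF that] by blast
  have T00: "T0 0 = 0" using Aadd[OF A0ne A0ne] by simp
  have add: "T (u + v) = T u + T v" if u: "u \<in> qclosure N2 A0" and v: "v \<in> qclosure N2 A0" for u v
  proof -
    have "lp A0 T0 (u + v) (T u + T v)"
      unfolding lp_def
    proof (intro allI impI)
      fix e :: real assume e: "0 < e"
      obtain a where a: "a \<in> A0" "Q (u - a) < e/2" "Q (T u - T0 a) < e/2"
      proof -
        have "0 < e / 2" using e by simp
        then show ?thesis using Tcl[OF u] that unfolding lp_def by blast
      qed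
      obtain a' where a': "a' \<in> A0" "Q (v - a') < e/2" "Q (T v - T0 a') < e/2"
      proof -
        have "0 < e / 2" using e by simp
        then show ?thesis using Tcl[OF v] that unfolding lp_def by blast
      qed
      have "Q ((u + v) - (a + a')) \<le> Q (u - a) + Q (v - a')"
        using Q_tri[of "u - a" "v - a'"] by (simp add: algebra_simps)
      moreover have "Q ((T u + T v) - T0 (a + a')) \<le> Q (T u - T0 a) + Q (T v - T0 a')"
        using Q_tri[of "T u - T0 a" "T v - T0 a'"] Aadd[OF a(1) a'(1)] by (simp add: algebra_simps)
      ultimately have m1: "Q ((u + v) - (a + a')) < e" and m2: "Q ((T u + T v) - T0 (a + a')) < e"
        using a(2,3) a'(2,3) by linarith+
      show "\<exists>b\<in>A0. Q (u + v - b) < e \<and> Q (T u + T v - T0 b) < e"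
        using Aadd[OF a(1) a'(1)] m1 m2 by blast
    qed
    then show ?thesis using lp_unique[OF gA Tlp] by blast
  qed
  have scale: "T (sc c u) = sc c (T u)" if u: "u \<in> qclosure N2 A0" for c u
  proof (cases "c = 0")
    case True
    then show ?thesis using TA[OF A0ne] T00 by simp
  next
    case False
    define k where "k = norm c powr p"
    have k: "0 < k" using False by (simp add: k_def)
    have "lp A0 T0 (sc c u) (sc c (T u))"
      unfolding lp_def
    proof (intro allI impI)
      fix e :: real assume e: "0 < e"
      obtain a where a: "a \<in> A0" "Q (u - a) < e / k" "Q (T u - T0 a) < e / k"
      proof -
        have "0 < e / k" using e k by simp
        then show ?thesis using Tcl[OF u] that unfolding lp_def by blast
      qed
      have "Q (sc c u - sc c a) = k * Q (u - a)"
        by (simp add: k_def Q_scale scale_right_diff_distrib[symmetric])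
      also have "\<dots> < e" using a(2) k by (simp add: field_simps)
      finally have 1: "Q (sc c u - sc c a) < e" .
      have "Q (sc c (T u) - T0 (sc c a)) = k * Q (T u - T0 a)"
        using Ascale[OF a(1)] by (simp add: k_def Q_scale scale_right_diff_distrib[symmetric])
      also have "\<dots> < e" using a(3) k by (simp add: field_simps)
      finally have 2: "Q (sc c (T u) - T0 (sc c a)) < e" .
      show "\<exists>b\<in>A0. Q (sc c u - b) < e \<and> Q (sc c (T u) - T0 b) < e"
        using 1 2 Ascale[OF a(1)] by blast
    qed
    then show ?thesis using lp_unique[OF gA Tlp] by blast
  qed
  have isoQ: "Q (T u) = Q u" if u: "u \<in> qclosure N2 A0" for u
  proof -
    have "\<bar>Q (T u) - Q u\<bar> < e" if e: "0 < e" for e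
    proof -
      obtain a where a: "a \<in> A0" "Q (u - a) < e/2" "Q (T u - T0 a) < e/2"
      proof -
        have "0 < e / 2" using e by simp
        then show ?thesis using Tcl[OF u] that unfolding lp_def by blast
      qed
      have qa: "Q (T0 a) = Q a" using gA a(1) unfolding good_map_def by blast
      have "Q (T u) \<le> Q (T u - T0 a) + Q (T0 a)" using Q_tri[of "T u - T0 a" "T0 a"] by simp
      moreover have "Q (T0 a) \<le> Q (T0 a - T u) + Q (T u)" using Q_tri[of "T0 a - T u" "T u"] by simp
      moreover have "Q u \<le> Q (u - a) + Q a" using Q_tri[of "u - a" a] by simp
      moreover have "Q a \<le> Q (a - u) + Q u" using Q_tri[of "a - u" u] by simp
      ultimately show ?thesis using a qa Q_sym[of "T0 a" "T u"] Q_sym[of a u] by (simp add: abs_less_iff)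
    qed
    note H = this
    show ?thesis
    proof (rule ccontr)
      assume "Q (T u) \<noteq> Q u"
      then have "0 < \<bar>Q (T u) - Q u\<bar>" by simp
      from H[OF this] show False by simp
    qed
  qed
  have iso: "N2 (T u) = N2 u" if "u \<in> qclosure N2 A0" for u
    using isoQ[OF that] by (simp add: N2_def)
  have into: "T u \<in> qclosure N2 B0" if u: "u \<in> qclosure N2 A0" for u
    unfolding qcl_Q using Tcl[OF u] TB unfolding lp_def by blast
  have inj: "inj_on T (qclosure N2 A0)"
  proof (rule inj_onI)
    fix u v assume u: "u \<in> qclosure N2 A0" and v: "v \<in> qclosure N2 A0" and eq: "T u = T v"
    have "Q (u - v) < e" if e: "0 < e" for e
    proof -
      have e4: "0 < e / 4" using e by simp
      obtain a where a: "a \<in> A0" "Q (u - a) < e/4" "Q (T u - T0 a) < e/4"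
        using Tcl[OF u] e4 unfolding lp_def by blast
      obtain a' where a': "a' \<in> A0" "Q (v - a') < e/4" "Q (T v - T0 a') < e/4"
        using Tcl[OF v] e4 unfolding lp_def by blast
      have "Q (a - a') = Q (T0 a - T0 a')" using gA a(1) a'(1) unfolding good_map_def by metis
      also have "\<dots> \<le> Q (T0 a - T u) + Q (T u - T0 a')" by (rule Q_tri3)
      finally have m: "Q (a - a') < e / 2" using a(3) a'(3) eq Q_sym[of "T0 a" "T u"] by simp
      have "Q (u - v) \<le> Q (u - a) + Q (a - v)" by (rule Q_tri3)
      also have "Q (a - v) \<le> Q (a - a') + Q (a' - v)" by (rule Q_tri3)
      finally show ?thesis using a(2) a'(2) m Q_sym[of a' v] by simp
    qed
    then have "u - v = 0" by (rule small_zero)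
    then show "u = v" by simp
  qed
  have onto: "b \<in> T ` qclosure N2 A0" if b: "b \<in> qclosure N2 B0" for b
  proof -
    obtain f where f: "lp B0 S0 b f" using lp_exists[OF compl gB b] by blast
    have fcl: "f \<in> qclosure N2 A0"
      unfolding qcl_Q
    proof (intro CollectI allI impI)
      fix e :: real assume e: "0 < e"
      obtain b' where b': "b' \<in> B0" "Q (b - b') < e" "Q (f - S0 b') < e" using f e unfolding lp_def by blast
      then show "\<exists>a\<in>A0. Q (f - a) < e" using SA by blast
    qed
    have "lp A0 T0 f b"
      unfolding lp_def
    proof (intro allI impI)
      fix e :: real assume e: "0 < e"
      obtain b' where b': "b' \<in> B0" "Q (b - b') < e" "Q (f - S0 b') < e" using f e unfolding lp_def by blast
      show "\<exists>a\<in>A0. Q (f - a) < e \<and> Q (b - T0 a) < e"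
        using b' SA TS by (intro bexI[of _ "S0 b'"]) auto
    qed
    then have "T f = b" using lp_unique[OF gA Tcl[OF fcl]] by blast
    then show ?thesis using fcl by blast
  qed
  have "bij_betw T (qclosure N2 A0) (qclosure N2 B0)"
    unfolding bij_betw_def using inj into onto by blast
  then show ?thesis using TA add scale iso by blast
qed

end

context sb3
begin

lemma qcomplete_Q:
  assumes compl: "qcomplete N" and a: "0 < a" and b: "0 < b"
    and eqv: "\<And>z. a * N z \<le> Np z \<and> Np z \<le> b * N z"
  shows "qcomplete Q"
  unfolding qcomplete_def
proof (intro allI impI)
  fix s :: "nat \<Rightarrow> 'a"
  assume cq: "\<forall>e>0. \<exists>M. \<forall>m\<ge>M. \<forall>n\<ge>M. Q (s m - s n) < e"
  have D0: "0 < D" using D_ge1 by simp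
  have NQ: "N z < e" if "Q z < (a * e / D) powr p" "0 < e" for z e
  proof -
    have r: "0 < a * e / D" using a that(2) D0 by simp
    have "N2 z < a * e / D" using N2_less_iff[OF r] that(1) by simp
    then have "Np z / D < a * e / D" using N2_lower[of z] D0 by (simp add: field_simps)
    then have "Np z < a * e" using D0 by (simp add: divide_less_cancel)
    then have "a * N z < a * e" using eqv[of z] by linarith
    then show ?thesis using a by simp
  qed
  have "\<forall>e>0. \<exists>M. \<forall>m\<ge>M. \<forall>n\<ge>M. N (s m - s n) < e"
  proof (intro allI impI)
    fix e :: real assume e: "0 < e"
    have "0 < (a * e / D) powr p" using a e D0 by simp
    then obtain M where "\<forall>m\<ge>M. \<forall>n\<ge>M. Q (s m - s n) < (a * e / D) powr p" using cq by blast
    then show "\<exists>M. \<forall>m\<ge>M. \<forall>n\<ge>M. N (s m - s n) < e" using NQ e by blast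
  qed
  then obtain y where y: "(\<lambda>n. N (s n - y)) \<longlonglongrightarrow> 0" using compl unfolding qcomplete_def by blast
  have up: "Q z \<le> (D * b * N z) powr p" for z
  proof -
    have "N2 z \<le> D * Np z" by (rule N2_upper)
    also have "\<dots> \<le> D * (b * N z)" using eqv[of z] D0 by (intro mult_left_mono) auto
    finally have "N2 z \<le> D * b * N z" by (simp add: mult.assoc)
    then have "N2 z powr p \<le> (D * b * N z) powr p" using p_pos N2_nonneg by (intro powr_mono2) auto
    then show ?thesis by (simp add: Q_pow)
  qed
  have Nnn: "0 \<le> N z" for z
  proof -
    have "0 \<le> b * N z" using eqv[of z] Np_nonneg[of z] by linarith
    then show ?thesis using b by (simp add: zero_le_mult_iff)
  qed
  have "(\<lambda>n. (D * b * N (s n - y)) powr p) \<longlonglongrightarrow> (D * b * 0) powr p"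
    using y p_pos D0 b Nnn by (intro tendsto_intros) auto
  then have l2: "(\<lambda>n. (D * b * N (s n - y)) powr p) \<longlonglongrightarrow> 0" using p_pos by simp
  have "(\<lambda>n. Q (s n - y)) \<longlonglongrightarrow> 0"
    by (rule tendsto_sandwich[OF _ _ tendsto_const l2]) (auto simp: Q_nonneg up)
  then show "\<exists>y. (\<lambda>n. Q (s n - y)) \<longlonglongrightarrow> 0" by blast
qed

lemma span_Ns_supp: "f \<in> span (x ` Ns) \<Longrightarrow> f \<in> V \<and> supp f \<subseteq> Ns"
  using span_rep[of f Ns] span_sub_V by blast

lemma good_map_R:
  assumes \<psi>: "strict_mono_on Ns \<psi>"
  shows "good_map (span (x ` Ns)) (R \<psi>)"
  unfolding good_map_def
proof (intro conjI ballI)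
  fix a a' assume a: "a \<in> span (x ` Ns)" and a': "a' \<in> span (x ` Ns)"
  show "a - a' \<in> span (x ` Ns)" using a a' by (rule span_diff)
  have aV: "a - a' \<in> V" "a' \<in> V" using span_Ns_supp a a' span_diff by blast+
  have "R \<psi> a = R \<psi> ((a - a') + a')" by simp
  also have "\<dots> = R \<psi> (a - a') + R \<psi> a'" by (rule R_add[OF aV])
  finally show "R \<psi> (a - a') = R \<psi> a - R \<psi> a'" by simp
next
  fix a assume a: "a \<in> span (x ` Ns)"
  have aV: "a \<in> V" and sa: "supp a \<subseteq> Ns" using span_Ns_supp[OF a] by auto
  have sm: "strict_mono_on (supp a) \<psi>" using \<psi> sa by (rule monotone_on_subset)
  show "Q (R \<psi> a) = Q a" using Q_V[OF aV] Q_V[OF R_V] N1_reloc[OF aV sm] by simp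
qed

lemma isometric_spreading_N2:
  assumes compl: "qcomplete Q" and Ns: "infinite Ns" and \<psi>: "strict_mono_on Ns \<psi>"
  shows "\<exists>T. translation_op sc N2 x Ns \<psi> T \<and> (\<forall>f\<in>cspan sc N2 x Ns. N2 (T f) \<le> N2 f)"
proof -
  define \<psi>' where "\<psi>' = inv_into Ns \<psi>"
  have inj: "inj_on \<psi> Ns" using \<psi> strict_mono_on_imp_inj_on by blast
  have \<psi>': "strict_mono_on (\<psi> ` Ns) \<psi>'" unfolding \<psi>'_def using strict_mono_on_inv[OF \<psi>] .
  let ?A = "span (x ` Ns)" and ?B = "span (x ` (\<psi> ` Ns))"
  have gA: "good_map ?A (R \<psi>)" by (rule good_map_R[OF \<psi>])
  have gB: "good_map ?B (R \<psi>')" by (rule good_map_R[OF \<psi>'])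
  have TB: "R \<psi> a \<in> ?B" if "a \<in> ?A" for a
  proof -
    have "supp a \<subseteq> Ns" using span_Ns_supp[OF that] by blast
    then have "x ` (\<psi> ` supp a) \<subseteq> x ` (\<psi> ` Ns)" by blast
    then show ?thesis using R_span[of \<psi> a] span_mono by blast
  qed
  have SA: "R \<psi>' b \<in> ?A" if "b \<in> ?B" for b
  proof -
    have "supp b \<subseteq> \<psi> ` Ns" using span_Ns_supp[OF that] by blast
    then have "\<psi>' ` supp b \<subseteq> Ns" unfolding \<psi>'_def by (auto intro: inv_into_into)
    then have "x ` (\<psi>' ` supp b) \<subseteq> x ` Ns" by blast
    then show ?thesis using R_span[of \<psi>' b] span_mono by blast
  qed
  have TS: "R \<psi> (R \<psi>' b) = b" if "b \<in> ?B" for b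
  proof -
    have bV: "b \<in> V" and sb: "supp b \<subseteq> \<psi> ` Ns" using span_Ns_supp[OF that] by auto
    have inj': "inj_on \<psi>' (supp b)" using \<psi>' sb monotone_on_subset strict_mono_on_imp_inj_on by blast
    have "R \<psi> (R \<psi>' b) = R (\<psi> \<circ> \<psi>') b" by (rule R_comp[OF bV inj'])
    also have "\<dots> = R id b" using sb unfolding \<psi>'_def by (intro R_cong) (auto simp: f_inv_into_f)
    also have "\<dots> = b" by (rule R_id[OF bV])
    finally show ?thesis .
  qed
  have Aadd: "a + a' \<in> ?A \<and> R \<psi> (a + a') = R \<psi> a + R \<psi> a'" if "a \<in> ?A" "a' \<in> ?A" for a a'
    using that span_add R_add span_Ns_supp by blast
  have Ascale: "sc c a \<in> ?A \<and> R \<psi> (sc c a) = sc c (R \<psi> a)" if "a \<in> ?A" for c a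
    using that span_scale R_scale span_Ns_supp by blast
  obtain T where T: "\<forall>a\<in>?A. T a = R \<psi> a"
    "\<forall>u\<in>qclosure N2 ?A. \<forall>v\<in>qclosure N2 ?A. T (u + v) = T u + T v"
    "\<forall>c. \<forall>u\<in>qclosure N2 ?A. T (sc c u) = sc c (T u)"
    "bij_betw T (qclosure N2 ?A) (qclosure N2 ?B)"
    "\<forall>u\<in>qclosure N2 ?A. N2 (T u) = N2 u"
    using extension[OF compl gA gB TB SA TS Aadd Ascale span_zero] by blast
  have Tx: "T (x n) = x (\<psi> n)" if "n \<in> Ns" for n
  proof -
    have "x n \<in> ?A" using that by (intro span_base) auto
    then show ?thesis using T(1) R_x by simp
  qed
  have cA: "cspan sc N2 x Ns = qclosure N2 ?A" and cB: "cspan sc N2 x (\<psi> ` Ns) = qclosure N2 ?B"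
    by (simp_all add: cspan_def)
  have "sub_isomorphism sc N2 (cspan sc N2 x Ns) (cspan sc N2 x (\<psi> ` Ns)) T"
    unfolding sub_isomorphism_def cA cB
  proof (intro conjI)
    show "\<exists>C. \<forall>u\<in>qclosure N2 ?A. N2 (T u) \<le> C * N2 u" using T(5) by (intro exI[of _ 1]) simp
    show "\<exists>c>0. \<forall>u\<in>qclosure N2 ?A. c * N2 u \<le> N2 (T u)" using T(5) by (intro exI[of _ 1]) simp
  qed (use T in auto)
  then have "translation_op sc N2 x Ns \<psi> T"
    unfolding translation_op_def using inj Tx by blast
  moreover have "\<forall>f\<in>cspan sc N2 x Ns. N2 (T f) \<le> N2 f" using T(5) cA by simp
  ultimately show ?thesis by blast
qed

end

theorem theorem2p8:
  fixes sc :: "'k::real_normed_field \<Rightarrow> 'a::ab_group_add \<Rightarrow> 'a"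
    and N :: "'a \<Rightarrow> real" and p :: real and x :: "nat \<Rightarrow> 'a"
  assumes "0 < p" and "p \<le> 1"
    and "quasi_banach sc N"
    and "locally_p_convex sc p N"
    and "spreading_basis sc N x"
  shows "\<exists>N'. p_norm sc p N' \<and> equiv_qnorm N N' \<and> isometrically_spreading sc N' x"
proof -
  have vs: "vector_space sc" and complN: "qcomplete N"
    using assms(3) unfolding quasi_banach_def by auto
  obtain Np where pn: "p_norm sc p Np" and eq: "equiv_qnorm N Np"
    using assms(4) unfolding locally_p_convex_def by blast
  obtain a b where ab: "0 < a" "0 < b" "\<And>z. a * N z \<le> Np z \<and> Np z \<le> b * N z"
    using eq unfolding equiv_qnorm_def by blast
  obtain xs where cf: "coord_functionals sc N x xs"
    and sp: "\<And>\<psi>. strict_mono \<psi> \<Longrightarrow> \<exists>L. is_shift_op sc N x xs UNIV \<psi> L \<and> (\<exists>c>0. \<forall>f. c * N f \<le> N (L f))"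
    using assms(5) unfolding spreading_basis_def by blast
  have xs_add: "xs n (f + g) = xs n f + xs n g" and xs_scale: "xs n (sc c f) = c * xs n f"
    and biorth: "xs n (x k) = (if n = k then 1 else 0)" for n f g c k
    using cf unfolding coord_functionals_def dual_elem_def by auto
  have sbF: "sb sc x xs"
    by (intro sb.intro vs sb_axioms.intro xs_add xs_scale biorth)
  interpret B: sb sc x xs by (rule sbF)
  have pn': "\<And>f. Np f \<ge> 0" "\<And>c f. Np (sc c f) = norm c * Np f"
    "\<And>f g. Np (f + g) powr p \<le> Np f powr p + Np g powr p" "\<And>f. Np f = 0 \<longleftrightarrow> f = 0"
    using pn unfolding p_norm_def by auto
  have spread: "\<exists>C c. c > 0 \<and> (\<forall>f\<in>B.V. c * Np f \<le> Np (B.R \<psi> f) \<and> Np (B.R \<psi> f) \<le> C * Np f)"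
    if \<psi>: "strict_mono \<psi>" for \<psi>
  proof -
    obtain L c where L: "is_shift_op sc N x xs UNIV \<psi> L" and c: "c > 0" "\<And>f. c * N f \<le> N (L f)"
      using sp[OF \<psi>] by blast
    obtain C where C: "\<And>z. N (L z) \<le> C * N z"
      using L unfolding is_shift_op_def bounded_op_def by blast
    have LR: "L f = B.R \<psi> f" if "f \<in> B.V" for f
    proof -
      have "L f = (\<Sum>n\<in>{n\<in>UNIV. xs n f \<noteq> 0}. sc (xs n f) (x (\<psi> n)))"
        using L that unfolding is_shift_op_def B.V_def by blast
      then show ?thesis by (simp add: B.R_def B.supp_def)
    qed
    have N0: "0 \<le> N z" for z
    proof -
      have "0 \<le> b * N z" using ab(3)[of z] pn'(1)[of z] by linarith
      then show ?thesis using ab by (simp add: zero_le_mult_iff)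
    qed
    have C0: "0 \<le> C"
    proof -
      have "0 \<le> C * N (x 0)" using C[of "x 0"] N0[of "L (x 0)"] by linarith
      moreover have "x 0 \<noteq> 0" using biorth[of 0 0] B.xs_zero[of 0] by auto
      then have "Np (x 0) \<noteq> 0" using pn'(4)[of "x 0"] by simp
      then have "0 < Np (x 0)" using pn'(1)[of "x 0"] by linarith
      then have "0 < b * N (x 0)" using ab(3)[of "x 0"] by linarith
      then have "0 < N (x 0)" using ab(2) by (simp add: zero_less_mult_iff)
      ultimately show ?thesis by (simp add: zero_le_mult_iff)
    qed
    have "c * a / b * Np f \<le> Np (B.R \<psi> f) \<and> Np (B.R \<psi> f) \<le> C * b / a * Np f" if f: "f \<in> B.V" for f
    proof
      have "Np (B.R \<psi> f) \<le> b * N (L f)" using ab(3) LR[OF f] by simp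
      also have "\<dots> \<le> b * (C * N f)" using C ab(2) by (intro mult_left_mono) auto
      also have "\<dots> \<le> b * (C * (Np f / a))"
        using ab C0 by (intro mult_left_mono) (auto simp: field_simps ab(3))
      finally show "Np (B.R \<psi> f) \<le> C * b / a * Np f" by (simp add: field_simps)
      have "c * a / b * Np f \<le> c * a / b * (b * N f)"
        using ab c by (intro mult_left_mono) auto
      also have "\<dots> = a * (c * N f)" using ab by (simp add: field_simps)
      also have "\<dots> \<le> a * N (L f)" using c ab by (intro mult_left_mono) auto
      also have "\<dots> \<le> Np (B.R \<psi> f)" using ab(3) LR[OF f] by simp
      finally show "c * a / b * Np f \<le> Np (B.R \<psi> f)" .
    qed
    moreover have "0 < c * a / b" using c ab by simp
    ultimately show ?thesis by blast
  qed
  have sb2F: "sb2 sc x xs Np"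
    by (intro sb2.intro sbF sb2_axioms.intro pn'(1) spread)
  interpret B2: sb2 sc x xs Np by (rule sb2F)
  have sb3F: "sb3 sc x xs Np p"
    by (intro sb3.intro sb2F sb3_axioms.intro assms(1) pn'(2,3,4))
  interpret B3: sb3 sc x xs Np p by (rule sb3F)
  have complQ: "qcomplete B3.Q" by (rule B3.qcomplete_Q[OF complN ab])
  have D0: "0 < B3.D" using B3.D_ge1 by simp
  show ?thesis
  proof (intro exI[of _ B3.N2] conjI)
    show "p_norm sc p B3.N2"
      unfolding p_norm_def using B3.N2_nonneg B3.N2_zero B3.N2_scale B3.N2_tri by blast
    show "equiv_qnorm N B3.N2"
      unfolding equiv_qnorm_def
    proof (rule exI[of _ "a / B3.D"], rule exI[of _ "B3.D * b"], intro conjI allI)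
      show "0 < a / B3.D" using ab D0 by simp
      show "0 < B3.D * b" using ab D0 by simp
      fix z
      have "a * N z \<le> Np z" using ab(3) by blast
      also have "\<dots> \<le> B3.D * B3.N2 z" by (rule B3.N2_lower)
      finally show "a / B3.D * N z \<le> B3.N2 z" using D0 by (simp add: field_simps)
      have "B3.N2 z \<le> B3.D * Np z" by (rule B3.N2_upper)
      also have "\<dots> \<le> B3.D * (b * N z)" using ab(3)[of z] D0 by (intro mult_left_mono) auto
      finally show "B3.N2 z \<le> B3.D * b * N z" by (simp add: mult.assoc)
    qed
    show "isometrically_spreading sc B3.N2 x"
      unfolding isometrically_spreading_def using B3.isometric_spreading_N2[OF complQ] by blast
  qed
qed

end
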